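(* If $w\in\{[4123],[2341]\}\subseteq S_4$, then there is no $x\in\mathfrak{sl}_4(\mathbb C)$ and Hessenberg space $H\subseteq\mathfrak{sl}_4(\mathbb C)$ such that $\mathcal B(x,H)=X_{w^{-1}}$ in $SL_4(\mathbb C)/B$.
   Context: $B$ is the Borel subgroup of upper triangular matrices in $SL_4(\mathbb C)$, with Lie algebra $\mathfrak b$. Permutations are in one-line notation; $\dot w$ is a scalar multiple in $SL_4(\mathbb C)$ of the permutation matrix with $e_i\mapsto e_{w(i)}$; $X_w$ is the closure of $B\dot wB/B$. A Hessenberg space is a subspace $H\subseteq\mathfrak{sl}_4(\mathbb C)$ with $[\mathfrak b,H]\subseteq H$; $\mathcal B(x,H)=\{gB: g^{-1}xg\in H\}$. *)

theory Defs
  imports "HOL-Analysis.Analysis" "HOL-Library.Numeral_Type"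
begin

text \<open>Matrices in M_4(C) are complex^4^4, indexed by the type 4 = {0,1,2,3}
 (index k of the paper corresponds to element k-1). A permutation in one-line
 notation is a bijection of type 4.\<close>

type_synonym mat4 = "complex^4^4"

definition SL4 :: "mat4 set" where
  "SL4 = {g. det g = 1}"

definition sl4 :: "mat4 set" where
  "sl4 = {x. trace x = 0}"

definition upper_tri :: "mat4 \<Rightarrow> bool" where
  "upper_tri A \<longleftrightarrow> (\<forall>i j. j < i \<longrightarrow> A $ i $ j = 0)"

definition Borel :: "mat4 set" where
  "Borel = {b \<in> SL4. upper_tri b}"

definition borel_alg :: "mat4 set" where
  "borel_alg = {y \<in> sl4. upper_tri y}"

definition cscale :: "complex \<Rightarrow> mat4 \<Rightarrow> mat4" where
  "cscale c A = (\<chi> i j. c * A $ i $ j)"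

definition bracket :: "mat4 \<Rightarrow> mat4 \<Rightarrow> mat4" where
  "bracket y h = y ** h - h ** y"

definition csubspace_sl4 :: "mat4 set \<Rightarrow> bool" where
  "csubspace_sl4 H \<longleftrightarrow> H \<subseteq> sl4 \<and> 0 \<in> H \<and> (\<forall>x\<in>H. \<forall>y\<in>H. x + y \<in> H)
      \<and> (\<forall>c. \<forall>x\<in>H. cscale c x \<in> H)"

definition hessenberg_space :: "mat4 set \<Rightarrow> bool" where
  "hessenberg_space H \<longleftrightarrow> csubspace_sl4 H \<and> (\<forall>y\<in>borel_alg. \<forall>h\<in>H. bracket y h \<in> H)"

definition coset :: "mat4 \<Rightarrow> mat4 set" where
  "coset g = {g ** b | b. b \<in> Borel}"

definition flag :: "mat4 set set" where
  "flag = coset ` SL4"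

definition flag_top :: "mat4 set topology" where
  "flag_top = topology (\<lambda>U. U \<subseteq> flag \<and> openin (top_of_set SL4) {g \<in> SL4. coset g \<in> U})"

text \<open>Permutation matrix e_i \<mapsto> e_{w(i)}, and a scalar multiple of it lying in SL_4.\<close>
definition perm_mat :: "(4 \<Rightarrow> 4) \<Rightarrow> mat4" where
  "perm_mat w = (\<chi> r c. if r = w c then 1 else 0)"

definition wdot :: "(4 \<Rightarrow> 4) \<Rightarrow> mat4" where
  "wdot w = cscale (SOME c. cscale c (perm_mat w) \<in> SL4) (perm_mat w)"

definition schubert :: "(4 \<Rightarrow> 4) \<Rightarrow> mat4 set set" where
  "schubert w = flag_top closure_of (coset ` {b1 ** wdot w ** b2 | b1 b2. b1 \<in> Borel \<and> b2 \<in> Borel})"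

definition hess_var :: "mat4 \<Rightarrow> mat4 set \<Rightarrow> mat4 set set" where
  "hess_var x H = {coset g | g. g \<in> SL4 \<and> matrix_inv g ** x ** g \<in> H}"

text \<open>The permutations [4123] and [2341] in one-line notation (0-based: w(i) = i-1, i+1 mod 4).\<close>
definition w4123 :: "4 \<Rightarrow> 4" where
  "w4123 = (\<lambda>i. if i = 0 then 3 else if i = 1 then 0 else if i = 2 then 1 else 2)"

definition w2341 :: "4 \<Rightarrow> 4" where
  "w2341 = (\<lambda>i. if i = 0 then 1 else if i = 1 then 2 else if i = 2 then 3 else 0)"

end

theory Submission
  imports Defs
begin


lemma U4: "(UNIV::4 set) = {0,1,2,3}"
  using UNIV_4 by auto

lemma ord4: "(0::4) < 1" "(0::4) < 2" "(0::4) < 3" "(1::4) < 2" "(1::4) < 3" "(2::4) < 3"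
  by (simp_all add: less_bit0_def bit0.Rep_0 bit0.Rep_1 bit0.Rep_numeral)

lemma all4: "(\<forall>i::4. P i) \<longleftrightarrow> P 0 \<and> P 1 \<and> P 2 \<and> P 3"
  by (metis UNIV_I U4 insertE singletonD)

lemma cases4: obtains "(i::4) = 0" | "i = 1" | "i = 2" | "i = 3"
  using U4 by blast

lemma sum4: "sum f (UNIV::4 set) = f 0 + f 1 + f 2 + f 3"
  unfolding U4 by (simp add: add.assoc)

lemma prod4: "prod f (UNIV::4 set) = f 0 * f 1 * f 2 * f 3"
  unfolding U4 by (simp add: mult.assoc)

lemma less4: "(i::4) < j \<longleftrightarrow> (i = 0 \<and> j \<noteq> 0) \<or> (i = 1 \<and> (j = 2 \<or> j = 3)) \<or> (i = 2 \<and> j = 3)"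
  apply (cases i rule: cases4; cases j rule: cases4)
  using ord4 by (auto simp: not_less_iff_gr_or_eq)

lemma le4: "(i::4) \<le> j \<longleftrightarrow> i = j \<or> i < j"
  by auto

section \<open>Matrix units\<close>

definition Em :: "4 \<Rightarrow> 4 \<Rightarrow> mat4" where
  "Em a b = (\<chi> r c. if r = a \<and> c = b then 1 else 0)"

definition dgm :: "(4 \<Rightarrow> complex) \<Rightarrow> mat4" where
  "dgm d = (\<chi> r c. if r = c then d r else 0)"

definition diagpart :: "mat4 \<Rightarrow> mat4" where
  "diagpart z = (\<chi> r c. if r = c then z$r$r else 0)"

lemma Em_nth[simp]: "Em a b $ r $ c = (if r = a \<and> c = b then 1 else 0)"
  by (simp add: Em_def)
lemma dgm_nth[simp]: "dgm d $ r $ c = (if r = c then d r else 0)"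
  by (simp add: dgm_def)
lemma diagpart_nth[simp]: "diagpart z $ r $ c = (if r = c then z$r$r else 0)"
  by (simp add: diagpart_def)
lemma cscale_nth[simp]: "cscale k A $ r $ c = k * A $ r $ c"
  by (simp add: cscale_def)
lemma mat_nth[simp]: "(mat x :: mat4) $ r $ c = (if r = c then x else 0)"
  by (simp add: mat_def)

lemma mult_nth: "(A ** B :: mat4) $ i $ j = (\<Sum>k\<in>UNIV. A$i$k * B$k$j)"
  by (simp add: matrix_matrix_mult_def)

lemma Em_mult_nth[simp]: "(Em a b ** A) $ i $ j = (if i = a then A $ b $ j else 0)"
  unfolding matrix_matrix_mult_def
  by (cases "i = a") (simp_all add: if_distrib[of "\<lambda>x. x * _"] sum.delta cong: if_cong)

lemma mult_Em_nth[simp]: "(A ** Em a b) $ i $ j = (if j = b then A $ i $ a else 0)"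
  unfolding matrix_matrix_mult_def
  by (cases "j = b") (simp_all add: if_distrib[of "\<lambda>x. _ * x"] sum.delta' cong: if_cong)

lemma bracket_nth: "bracket y z $ i $ j = (y ** z) $ i $ j - (z ** y) $ i $ j"
  by (simp add: bracket_def)

definition sub :: "mat4 set \<Rightarrow> bool" where
  "sub W \<longleftrightarrow> 0 \<in> W \<and> (\<forall>x\<in>W. \<forall>y\<in>W. x + y \<in> W) \<and> (\<forall>c. \<forall>x\<in>W. cscale c x \<in> W)"

lemma subD: assumes "sub W" shows "0 \<in> W" "x \<in> W \<Longrightarrow> y \<in> W \<Longrightarrow> x + y \<in> W" "x \<in> W \<Longrightarrow> cscale c x \<in> W"
  using assms unfolding sub_def by auto

lemma sub_diff: assumes "sub W" "x \<in> W" "y \<in> W" shows "x - y \<in> W"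
proof -
  have "x - y = x + cscale (-1) y" by (simp add: vec_eq_iff)
  thus ?thesis using subD[OF assms(1)] assms by metis
qed

lemma sub_sum: assumes "sub W" "finite A" "\<And>a. a \<in> A \<Longrightarrow> f a \<in> W" shows "sum f A \<in> W"
  using assms(2,3) by (induction A rule: finite_induct) (auto intro: subD[OF assms(1)])

lemma csubspace_sub: "csubspace_sl4 H \<Longrightarrow> sub H"
  unfolding csubspace_sl4_def sub_def by auto




lemma mat_eqI: "(\<And>i j. (A::mat4) $ i $ j = B $ i $ j) \<Longrightarrow> A = B"
  by (simp add: vec_eq_iff)

definition scal :: "(4 \<Rightarrow> 4 \<Rightarrow> complex) \<Rightarrow> mat4 \<Rightarrow> mat4" where
  "scal lam z = (\<chi> i j. lam i j * z$i$j)"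

definition goodlam :: "(4 \<Rightarrow> 4 \<Rightarrow> complex) \<Rightarrow> bool" where
  "goodlam lam \<longleftrightarrow> (\<forall>i k. lam i i = lam k k) \<and> (\<forall>i j k l. i \<noteq> j \<longrightarrow> (i,j) \<noteq> (k,l) \<longrightarrow> lam i j \<noteq> lam k l)"

definition bst :: "(4 \<Rightarrow> 4 \<Rightarrow> complex) \<Rightarrow> mat4 set \<Rightarrow> bool" where
  "bst lam W \<longleftrightarrow> sub W \<and> (\<forall>a b. a < b \<longrightarrow> (\<forall>z\<in>W. bracket (Em a b) z \<in> W)) \<and> (\<forall>z\<in>W. scal lam z \<in> W)"

fun popl :: "(4 \<Rightarrow> 4 \<Rightarrow> complex) \<Rightarrow> complex list \<Rightarrow> mat4 \<Rightarrow> mat4" where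
  "popl lam [] z = z"
| "popl lam (m#ms) z = (\<chi> i j. (lam i j - m) * popl lam ms z $ i $ j)"

lemma popl_nth: "popl lam ms z $ i $ j = prod_list (map (\<lambda>m. lam i j - m) ms) * z$i$j"
  by (induction ms) auto

lemma popl_in: assumes "bst lam W" "z \<in> W" shows "popl lam ms z \<in> W"
proof (induction ms)
  case Nil then show ?case using assms by simp
next
  case (Cons m ms)
  let ?y = "popl lam ms z"
  have "popl lam (m#ms) z = scal lam ?y - cscale m ?y"
    by (simp add: vec_eq_iff scal_def algebra_simps)
  moreover have "scal lam ?y \<in> W" "cscale m ?y \<in> W" "sub W"
    using Cons assms unfolding bst_def by (auto intro: subD)
  ultimately show ?case by (simp add: sub_diff)
qed

definition allpairs :: "(4 \<times> 4) list" where
  "allpairs = List.product [0,1,2,3] [0,1,2,3]"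

lemma set_allpairs: "set allpairs = UNIV"
proof -
  have "set [0,1,2,3::4] = UNIV" using U4 by simp
  thus ?thesis unfolding allpairs_def by (simp only: set_product) simp
qed

lemma bst_sub: "bst lam W \<Longrightarrow> sub W" by (simp add: bst_def)
lemma bst_br: "bst lam W \<Longrightarrow> a < b \<Longrightarrow> z \<in> W \<Longrightarrow> bracket (Em a b) z \<in> W" by (simp add: bst_def)

lemma comp_in:
  assumes B: "bst lam W" and G: "goodlam lam" and z: "z \<in> W" and pq: "p \<noteq> q" and nz: "z$p$q \<noteq> 0"
  shows "Em p q \<in> W"
proof -
  define ms where "ms = map (\<lambda>(k,l). lam k l) (filter (\<lambda>kl. kl \<noteq> (p,q)) allpairs)"
  define P where "P = prod_list (map (\<lambda>m. lam p q - m) ms)"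
  have Y: "popl lam ms z \<in> W" using popl_in[OF B z] .
  have P0: "P \<noteq> 0"
  proof -
    have "lam p q - m \<noteq> 0" if m: "m \<in> set ms" for m
    proof -
      obtain kl where kl: "kl \<in> set (filter (\<lambda>kl. kl \<noteq> (p,q)) allpairs)" "m = (case kl of (k,l) \<Rightarrow> lam k l)"
        using m unfolding ms_def by auto
      obtain k l where "kl = (k,l)" by (cases kl)
      with kl have "(p,q) \<noteq> (k,l)" "m = lam k l" by auto
      thus ?thesis using G pq unfolding goodlam_def by (metis eq_iff_diff_eq_0)
    qed
    hence "0 \<notin> set (map (\<lambda>m. lam p q - m) ms)" by auto
    thus ?thesis unfolding P_def by (simp add: prod_list_zero_iff)
  qed
  have E: "popl lam ms z = cscale (P * z$p$q) (Em p q)"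
  proof -
    have "popl lam ms z $ i $ j = cscale (P * z$p$q) (Em p q) $ i $ j" for i j
    proof (cases "(i,j) = (p,q)")
      case True then show ?thesis by (simp add: popl_nth P_def)
    next
      case False
      have "(i,j) \<in> set (filter (\<lambda>kl. kl \<noteq> (p,q)) allpairs)" using False set_allpairs by simp
      hence "lam i j \<in> set ms" unfolding ms_def by (metis (no_types, lifting) case_prod_conv image_eqI set_map)
      hence "0 \<in> set (map (\<lambda>m. lam i j - m) ms)"
        by (metis (no_types, lifting) diff_self image_eqI set_map)
      hence "prod_list (map (\<lambda>m. lam i j - m) ms) = 0" by (simp add: prod_list_zero_iff)
      thus ?thesis using False by (auto simp: popl_nth)
    qed
    thus ?thesis by (simp add: vec_eq_iff)
  qed
  have "Em p q = cscale (1 / (P * z$p$q)) (popl lam ms z)"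
    using P0 nz unfolding E by (simp add: vec_eq_iff)
  thus ?thesis using Y subD(3)[OF bst_sub[OF B]] by metis
qed

lemma diag_in:
  assumes B: "bst lam W" and G: "goodlam lam" and z: "z \<in> W"
  shows "diagpart z \<in> W"
proof -
  define ms where "ms = map (\<lambda>(k,l). lam k l) (filter (\<lambda>(k,l). k \<noteq> l) allpairs)"
  define P where "P = prod_list (map (\<lambda>m. lam 0 0 - m) ms)"
  have Y: "popl lam ms z \<in> W" using popl_in[OF B z] .
  have ld: "lam i i = lam 0 0" for i using G unfolding goodlam_def by blast
  have P0: "P \<noteq> 0"
  proof -
    have "lam 0 0 - m \<noteq> 0" if m: "m \<in> set ms" for m
    proof -
      obtain kl where kl: "kl \<in> set (filter (\<lambda>(k,l). k \<noteq> l) allpairs)" "m = (case kl of (k,l) \<Rightarrow> lam k l)"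
        using m unfolding ms_def by auto
      obtain k l where "kl = (k,l)" by (cases kl)
      with kl have "k \<noteq> l" "m = lam k l" by auto
      have g2: "\<forall>i j k l. i \<noteq> j \<longrightarrow> (i,j) \<noteq> (k,l) \<longrightarrow> lam i j \<noteq> lam k l"
        using G unfolding goodlam_def by blast
      have "lam k l \<noteq> lam 0 0" using g2[rule_format, of k l 0 0] \<open>k \<noteq> l\<close> by blast
      thus ?thesis using \<open>m = lam k l\<close> by simp
    qed
    hence "0 \<notin> set (map (\<lambda>m. lam 0 0 - m) ms)" by auto
    thus ?thesis unfolding P_def by (simp add: prod_list_zero_iff)
  qed
  have E: "popl lam ms z = cscale P (diagpart z)"
  proof -
    have "popl lam ms z $ i $ j = cscale P (diagpart z) $ i $ j" for i j
    proof (cases "i = j")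
      case True then show ?thesis using ld[of i] by (simp add: popl_nth P_def)
    next
      case False
      have "(i,j) \<in> set (filter (\<lambda>(k,l). k \<noteq> l) allpairs)" using False set_allpairs by simp
      hence "lam i j \<in> set ms" unfolding ms_def by (metis (no_types, lifting) case_prod_conv image_eqI set_map)
      hence "0 \<in> set (map (\<lambda>m. lam i j - m) ms)"
        by (metis (no_types, lifting) diff_self image_eqI set_map)
      hence "prod_list (map (\<lambda>m. lam i j - m) ms) = 0" by (simp add: prod_list_zero_iff)
      thus ?thesis using False by (auto simp: popl_nth)
    qed
    thus ?thesis by (simp add: vec_eq_iff)
  qed
  have "diagpart z = cscale (1 / P) (popl lam ms z)"
    using P0 unfolding E by (simp add: vec_eq_iff)
  thus ?thesis using Y subD(3)[OF bst_sub[OF B]] by metis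
qed

lemma brk_diag:
  assumes "\<And>i j. i \<noteq> j \<Longrightarrow> d$i$j = 0"
  shows "bracket (Em a b) d = cscale (d$b$b - d$a$a) (Em a b)"
proof -
  have "bracket (Em a b) d $ i $ j = cscale (d$b$b - d$a$a) (Em a b) $ i $ j" for i j
  proof -
    have "bracket (Em a b) d $ i $ j = (if i = a then d $ b $ j else 0) - (if j = b then d $ i $ a else 0)"
      by (simp add: bracket_def)
    also have "\<dots> = cscale (d$b$b - d$a$a) (Em a b) $ i $ j"
      using assms[of b j] assms[of i a] by (cases "i = a"; cases "j = b") auto
    finally show ?thesis .
  qed
  thus ?thesis by (simp add: vec_eq_iff)
qed

lemma diag_step:
  assumes B: "bst lam W" and d: "d \<in> W" "\<And>i j. i \<noteq> j \<Longrightarrow> d$i$j = 0" and ab: "a < b" and ne: "d$a$a \<noteq> d$b$b"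
  shows "Em a b \<in> W"
proof -
  have "bracket (Em a b) d \<in> W" using bst_br[OF B ab d(1)] .
  hence "cscale (1/(d$b$b - d$a$a)) (bracket (Em a b) d) \<in> W" using subD(3)[OF bst_sub[OF B]] by blast
  moreover have "cscale (1/(d$b$b - d$a$a)) (bracket (Em a b) d) = Em a b"
    using ne by (simp add: brk_diag[OF d(2)] vec_eq_iff)
  ultimately show ?thesis by simp
qed

lemma mvR: assumes B: "bst lam W" and "Em k l \<in> W" "l < b" "b \<noteq> k" shows "Em k b \<in> W"
proof -
  have "bracket (Em l b) (Em k l) $ i $ j = cscale (-1) (Em k b) $ i $ j" for i j
    using assms(4) by (simp add: bracket_def)
  hence "bracket (Em l b) (Em k l) = cscale (-1) (Em k b)" by (simp add: vec_eq_iff)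
  hence "cscale (-1) (bracket (Em l b) (Em k l)) = Em k b" by (simp add: vec_eq_iff)
  thus ?thesis using bst_br[OF B assms(3,2)] subD(3)[OF bst_sub[OF B]] by metis
qed

lemma mvU: assumes B: "bst lam W" and "Em k l \<in> W" "a < k" "a \<noteq> l" shows "Em a l \<in> W"
proof -
  have "bracket (Em a k) (Em k l) $ i $ j = Em a l $ i $ j" for i j
    using assms(3,4) by (simp add: bracket_def)
  hence "bracket (Em a k) (Em k l) = Em a l" by (simp add: vec_eq_iff)
  thus ?thesis using bst_br[OF B assms(3,2)] by metis
qed

lemma cross_h: assumes B: "bst lam W" and "Em k l \<in> W" "l < k" shows "Em l l - Em k k \<in> W"
proof -
  have "bracket (Em l k) (Em k l) $ i $ j = (Em l l - Em k k) $ i $ j" for i j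
    using assms(3) by (simp add: bracket_def)
  hence "bracket (Em l k) (Em k l) = Em l l - Em k k" by (simp add: vec_eq_iff)
  thus ?thesis using bst_br[OF B assms(3,2)] by metis
qed

lemma crossR: assumes B: "bst lam W" and "Em k l \<in> W" "l < k" "l < b" shows "Em l b \<in> W"
proof -
  have h: "Em l l - Em k k \<in> W" using cross_h[OF assms(1-3)] .
  have "(Em l l - Em k k) $ l $ l \<noteq> (Em l l - Em k k) $ b $ b"
    using assms(3,4) by auto
  moreover have hd: "\<And>i j. i \<noteq> j \<Longrightarrow> (Em l l - Em k k)$i$j = 0" by auto
  ultimately show ?thesis using diag_step[OF B h hd assms(4)] by blast
qed

lemma up_in: assumes B: "bst lam W" and E: "Em i j \<in> W" and ij: "i \<noteq> j" and "a \<le> i" "j \<le> b" "a \<noteq> b"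
  shows "Em a b \<in> W"
proof (cases "a = i")
  case True
  then show ?thesis using assms mvR[OF B E, of b] by (cases "b = j") (auto simp: le_less)
next
  case False
  hence ai: "a < i" using assms by simp
  show ?thesis
  proof (cases "b = j")
    case True then show ?thesis using mvU[OF B E ai] assms by simp
  next
    case False
    hence jb: "j < b" using assms by simp
    show ?thesis
    proof (cases "a = j")
      case True
      hence "j < i" using ai by simp
      then show ?thesis using crossR[OF B E _ jb] True by simp
    next
      case False
      have "Em a j \<in> W" using mvU[OF B E ai False] .
      then show ?thesis using mvR[OF B _ jb] assms by simp
    qed
  qed
qed

lemma low_h: assumes B: "bst lam W" and "Em j i \<in> W" "i < j" shows "Em i i - Em j j \<in> W"
  using cross_h[OF assms] .

lemma matrix_decomp:
  "z = (\<Sum>p\<in>{p::4\<times>4. fst p \<noteq> snd p}. cscale (z $ fst p $ snd p) (Em (fst p) (snd p))) + diagpart z"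
proof -
  let ?g = "\<lambda>p::4\<times>4. cscale (z $ fst p $ snd p) (Em (fst p) (snd p))"
  let ?S = "{p::4\<times>4. fst p \<noteq> snd p}"
  have X: "(\<Sum>p\<in>?S. ?g p) $ i $ j = (if i \<noteq> j then z$i$j else 0)" for i j
  proof -
    have "(\<Sum>p\<in>?S. ?g p) $ i $ j = (\<Sum>p\<in>?S. ?g p $ i $ j)"
      by (simp only: sum_component)
    also have "\<dots> = (\<Sum>p\<in>?S. if p = (i,j) then z$i$j else 0)"
    proof (rule sum.cong)
      fix p :: "4\<times>4" show "?g p $ i $ j = (if p = (i,j) then z$i$j else 0)"
        by (cases p) auto
    qed simp
    also have "\<dots> = (if i \<noteq> j then z$i$j else 0)" by (simp add: sum.delta')
    finally show ?thesis .
  qed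
  have "z $ i $ j = ((\<Sum>p\<in>?S. ?g p) + diagpart z) $ i $ j" for i j
    by (simp only: vector_add_component X) simp
  thus ?thesis by (rule mat_eqI)
qed

lemma memtest:
  assumes S: "sub W" and off: "\<And>i j. i \<noteq> j \<Longrightarrow> z$i$j \<noteq> 0 \<Longrightarrow> Em i j \<in> W" and dg: "diagpart z \<in> W"
  shows "z \<in> W"
proof -
  have "(\<Sum>p\<in>{p::4\<times>4. fst p \<noteq> snd p}. cscale (z $ fst p $ snd p) (Em (fst p) (snd p))) \<in> W"
  proof (rule sub_sum[OF S])
    show "finite {p::4\<times>4. fst p \<noteq> snd p}" by simp
    fix p :: "4\<times>4" assume p: "p \<in> {p. fst p \<noteq> snd p}"
    show "cscale (z $ fst p $ snd p) (Em (fst p) (snd p)) \<in> W"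
    proof (cases "z $ fst p $ snd p = 0")
      case True
      have "cscale (z $ fst p $ snd p) (Em (fst p) (snd p)) = 0" using True by (simp add: vec_eq_iff)
      then show ?thesis using subD(1)[OF S] by simp
    next
      case False then show ?thesis using off[of "fst p" "snd p"] p subD(3)[OF S] by auto
    qed
  qed
  hence "(\<Sum>p\<in>{p::4\<times>4. fst p \<noteq> snd p}. cscale (z $ fst p $ snd p) (Em (fst p) (snd p))) + diagpart z \<in> W"
    using subD(2)[OF S _ dg] by blast
  thus ?thesis by (subst matrix_decomp[of z])
qed




lemma mm_addL: "((A::mat4) + B) ** C = A ** C + B ** C"
  by (simp add: vec_eq_iff matrix_matrix_mult_def sum.distrib distrib_right)
lemma mm_addR: "(A::mat4) ** (B + C) = A ** B + A ** C"
  by (rule matrix_add_ldistrib)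
lemma mm_subL: "((A::mat4) - B) ** C = A ** C - B ** C"
  by (simp add: vec_eq_iff matrix_matrix_mult_def sum_subtractf left_diff_distrib)
lemma mm_subR: "(A::mat4) ** (B - C) = A ** B - A ** C"
  by (simp add: vec_eq_iff matrix_matrix_mult_def sum_subtractf right_diff_distrib)
lemma mm_cscaleL: "cscale c (A::mat4) ** B = cscale c (A ** B)"
  by (simp add: vec_eq_iff matrix_matrix_mult_def sum_distrib_left mult.assoc)
lemma mm_cscaleR: "(A::mat4) ** cscale c B = cscale c (A ** B)"
  by (simp add: vec_eq_iff matrix_matrix_mult_def sum_distrib_left mult.left_commute)
lemma mm_zeroL[simp]: "(0::mat4) ** A = 0"
  by (simp add: vec_eq_iff matrix_matrix_mult_def)
lemma mm_zeroR[simp]: "(A::mat4) ** 0 = 0"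
  by (simp add: vec_eq_iff matrix_matrix_mult_def)

lemma dgm_mult_nth[simp]: "(dgm d ** A) $ i $ j = d i * A $ i $ j"
  unfolding matrix_matrix_mult_def
  by (simp add: if_distrib[of "\<lambda>x. x * _"] sum.delta cong: if_cong)
lemma mult_dgm_nth[simp]: "(A ** dgm d) $ i $ j = A $ i $ j * d j"
  unfolding matrix_matrix_mult_def
  by (simp add: if_distrib[of "\<lambda>x. _ * x"] sum.delta' cong: if_cong)

lemma inv_unique: assumes "(A::mat4) ** B = mat 1" shows "matrix_inv A = B"
proof -
  have BA: "B ** A = mat 1" using assms matrix_left_right_inverse by blast
  have ex: "\<exists>A'. A ** A' = mat 1 \<and> A' ** A = mat 1" using assms BA by blast
  have "A ** matrix_inv A = mat 1 \<and> matrix_inv A ** A = mat 1"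
    unfolding matrix_inv_def by (rule someI_ex[OF ex])
  hence "matrix_inv A = matrix_inv A ** (A ** B)" using assms by simp
  also have "\<dots> = B" using \<open>A ** matrix_inv A = mat 1 \<and> matrix_inv A ** A = mat 1\<close>
    by (simp add: matrix_mul_assoc)
  finally show ?thesis .
qed

lemma inv_lr: assumes "det (A::mat4) \<noteq> 0"
  shows "A ** matrix_inv A = mat 1" "matrix_inv A ** A = mat 1"
proof -
  have "invertible A" using assms invertible_det_nz by blast
  then obtain B where "A ** B = mat 1" unfolding invertible_def by blast
  hence "matrix_inv A = B" by (rule inv_unique)
  thus "A ** matrix_inv A = mat 1" "matrix_inv A ** A = mat 1"
    using \<open>A ** B = mat 1\<close> matrix_left_right_inverse by blast+
qed

lemma inv_mult: assumes "det (A::mat4) \<noteq> 0" "det B \<noteq> 0"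
  shows "matrix_inv (A ** B) = matrix_inv B ** matrix_inv A"
proof (rule inv_unique)
  have "A ** B ** (matrix_inv B ** matrix_inv A) = A ** (B ** matrix_inv B) ** matrix_inv A"
    by (simp add: matrix_mul_assoc)
  also have "\<dots> = mat 1" using inv_lr[OF assms(1)] inv_lr[OF assms(2)] by simp
  finally show "A ** B ** (matrix_inv B ** matrix_inv A) = mat 1" .
qed

lemma inv_one[simp]: "matrix_inv (mat 1 :: mat4) = mat 1"
  by (rule inv_unique) simp

section \<open>Borel\<close>

lemma upper_triD: "upper_tri A \<Longrightarrow> j < i \<Longrightarrow> A $ i $ j = 0"
  unfolding upper_tri_def by blast

lemma upper_mult: assumes "upper_tri A" "upper_tri B" shows "upper_tri (A ** B)"
  unfolding upper_tri_def
proof (intro allI impI)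
  fix i j :: 4 assume ji: "j < i"
  have h: "A $ i $ k * B $ k $ j = 0" for k
  proof (cases "k < i")
    case True then show ?thesis using upper_triD[OF assms(1)] by simp
  next
    case False then have "j < k" using ji by simp
    then show ?thesis using upper_triD[OF assms(2)] by simp
  qed
  have "(A ** B) $ i $ j = (\<Sum>k\<in>UNIV. A $ i $ k * B $ k $ j)" by (simp add: matrix_matrix_mult_def)
  also have "\<dots> = 0" by (rule sum.neutral) (use h in blast)
  finally show "(A ** B) $ i $ j = 0" .
qed

lemma det_upper: "upper_tri (A::mat4) \<Longrightarrow> det A = A$0$0 * A$1$1 * A$2$2 * A$3$3"
  using det_upperdiagonal[of A] upper_triD[of A] by (simp add: prod4)

lemma Borel_mult: "b1 \<in> Borel \<Longrightarrow> b2 \<in> Borel \<Longrightarrow> b1 ** b2 \<in> Borel"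
  unfolding Borel_def SL4_def by (auto simp: det_mul upper_mult)

lemma Borel_one: "mat 1 \<in> Borel"
  unfolding Borel_def SL4_def upper_tri_def by auto

lemma Borel_det: "b \<in> Borel \<Longrightarrow> det b = 1"
  unfolding Borel_def SL4_def by auto

lemma Borel_diag_nz: assumes "b \<in> Borel" shows "b $ i $ i \<noteq> 0"
proof -
  have "b$0$0 * b$1$1 * b$2$2 * b$3$3 = 1" using assms det_upper[of b] unfolding Borel_def SL4_def by auto
  thus ?thesis by (cases i rule: cases4) auto
qed

definition hv :: "4 \<Rightarrow> complex" where
  "hv i = (if i = 0 then -11 else if i = 1 then -7 else if i = 2 then 1 else 17)"

definition lamH :: "4 \<Rightarrow> 4 \<Rightarrow> complex" where
  "lamH i j = hv i - hv j"

lemma goodlamH: "goodlam lamH"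
  unfolding goodlam_def lamH_def hv_def by (simp only: all4) simp

lemma trace4: "trace (A::mat4) = A$0$0 + A$1$1 + A$2$2 + A$3$3"
  by (simp add: trace_def sum4)

lemma h0_borel: "dgm hv \<in> borel_alg"
  unfolding borel_alg_def sl4_def upper_tri_def by (simp add: trace4 hv_def)

lemma Em_borel: "a < b \<Longrightarrow> Em a b \<in> borel_alg"
  unfolding borel_alg_def sl4_def upper_tri_def by (auto simp: trace4)

lemma scal_lamH: "scal lamH z = bracket (dgm hv) z"
  by (rule mat_eqI) (simp add: scal_def lamH_def bracket_def algebra_simps)

lemma hess_bst: assumes "hessenberg_space H" shows "bst lamH H"
  unfolding bst_def
proof (intro conjI allI impI ballI)
  show "sub H" using assms csubspace_sub unfolding hessenberg_space_def by blast
  fix a b :: 4 and z assume "a < b" "z \<in> H"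
  thus "bracket (Em a b) z \<in> H" using assms Em_borel unfolding hessenberg_space_def by blast
next
  fix z assume "z \<in> H"
  thus "scal lamH z \<in> H" using assms h0_borel unfolding hessenberg_space_def scal_lamH by blast
qed




lemma hessD: assumes "hessenberg_space H"
  shows "sub H" "y \<in> borel_alg \<Longrightarrow> h \<in> H \<Longrightarrow> bracket y h \<in> H"
  using assms csubspace_sub unfolding hessenberg_space_def by blast+

lemma AdN_eq: assumes NN: "N ** N = (0::mat4)"
  shows "(mat 1 - N) ** y ** (mat 1 + N) = y - bracket N y + cscale (1/2) (bracket N (bracket N y))"
proof -
  have e1: "N ** (N ** y) = 0" using NN by (simp add: matrix_mul_assoc)
  have e2: "(y ** N) ** N = 0" using NN by (simp add: matrix_mul_assoc[symmetric])
  have e3: "N ** (y ** N) = (N ** y) ** N" by (simp add: matrix_mul_assoc)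
  have L: "(mat 1 - N) ** y ** (mat 1 + N) = y - N ** y + (y ** N - (N ** y) ** N)"
    by (simp add: mm_subL mm_addR)
  have R: "bracket N (bracket N y) = (0 - (N ** y) ** N) - ((N ** y) ** N - 0)"
    unfolding bracket_def by (simp only: mm_subR mm_subL e1 e2 e3)
  show ?thesis unfolding L R by (rule mat_eqI) (simp add: bracket_def algebra_simps)
qed

lemma AdN: assumes H: "hessenberg_space H" and y: "y \<in> H" and N: "N \<in> borel_alg" "N ** N = 0"
  shows "(mat 1 - N) ** y ** (mat 1 + N) \<in> H"
proof -
  have S: "sub H" using hessD(1)[OF H] .
  have b1: "bracket N y \<in> H" using hessD(2)[OF H N(1) y] .
  have b2: "bracket N (bracket N y) \<in> H" using hessD(2)[OF H N(1) b1] .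
  have "y - bracket N y + cscale (1/2) (bracket N (bracket N y)) \<in> H"
    using S y b1 b2 by (intro subD(2)[OF S] sub_diff subD(3)) auto
  thus ?thesis using AdN_eq[OF N(2)] by simp
qed

lemma dgm_inv: assumes "\<And>i. d i \<noteq> 0" shows "matrix_inv (dgm d) = dgm (\<lambda>i. 1 / d i)"
  by (rule inv_unique, rule mat_eqI) (simp add: assms)

lemma Ad_diag: assumes H: "hessenberg_space H" and y: "y \<in> H" and d: "\<And>i. d i \<noteq> 0"
  shows "dgm (\<lambda>i. 1 / d i) ** y ** dgm d \<in> H"
proof -
  have B: "bst lamH H" using hess_bst[OF H] .
  let ?M = "dgm (\<lambda>i. 1 / d i) ** y ** dgm d"
  have Mnth: "?M $ i $ j = (1 / d i) * y $ i $ j * d j" for i j by simp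
  show ?thesis
  proof (rule memtest[OF bst_sub[OF B]])
    fix i j assume ij: "i \<noteq> j" "?M $ i $ j \<noteq> 0"
    hence "y $ i $ j \<noteq> 0" unfolding Mnth by auto
    thus "Em i j \<in> H" using comp_in[OF B goodlamH y ij(1)] by blast
  next
    have "diagpart ?M = diagpart y" by (rule mat_eqI) (simp add: d)
    thus "diagpart ?M \<in> H" using diag_in[OF B goodlamH y] by simp
  qed
qed

definition Ncol :: "mat4 \<Rightarrow> 4 \<Rightarrow> mat4" where
  "Ncol b j = (\<chi> r c. if c = j \<and> r < j then b$r$c / b$r$r else 0)"

lemma Ncol_nth[simp]: "Ncol b j $ r $ c = (if c = j \<and> r < j then b$r$c / b$r$r else 0)"
  by (simp add: Ncol_def)

lemma Ncol_prod: assumes "\<not> a < c" shows "Ncol b a ** Ncol b c = 0"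
proof (rule mat_eqI)
  fix r s :: 4
  have h: "Ncol b a $ r $ m * Ncol b c $ m $ s = 0" for m using assms by auto
  have "(Ncol b a ** Ncol b c) $ r $ s = (\<Sum>m\<in>UNIV. Ncol b a $ r $ m * Ncol b c $ m $ s)"
    by (simp only: mult_nth)
  also have "\<dots> = 0" by (rule sum.neutral) (use h in blast)
  finally have "(Ncol b a ** Ncol b c) $ r $ s = 0" .
  thus "(Ncol b a ** Ncol b c) $ r $ s = 0 $ r $ s" by simp
qed

lemma Ncol_borel: "Ncol b j \<in> borel_alg"
  unfolding borel_alg_def sl4_def upper_tri_def by (auto simp: trace4)

lemma AB_one: assumes "N ** N = (0::mat4)" shows "(mat 1 - N) ** (mat 1 + N) = mat 1"
  using assms by (simp add: mm_subL mm_addR)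

lemma Borel_decomp: assumes b: "b \<in> Borel"
  shows "b = dgm (\<lambda>i. b$i$i) ** ((mat 1 + Ncol b 3) ** (mat 1 + Ncol b 2) ** (mat 1 + Ncol b 1))"
proof -
  have up: "upper_tri b" using b unfolding Borel_def by simp
  have nz: "b$i$i \<noteq> 0" for i using Borel_diag_nz[OF b] .
  have P: "(mat 1 + Ncol b 3) ** (mat 1 + Ncol b 2) ** (mat 1 + Ncol b 1) = mat 1 + Ncol b 1 + Ncol b 2 + Ncol b 3"
    using Ncol_prod[of 3 2 b] Ncol_prod[of 3 1 b] Ncol_prod[of 2 1 b] ord4
    by (simp add: mm_addL mm_addR matrix_mul_assoc[symmetric] algebra_simps)
  show ?thesis unfolding P
  proof (rule mat_eqI)
    fix r c :: 4
    show "b $ r $ c = (dgm (\<lambda>i. b $ i $ i) ** (mat 1 + Ncol b 1 + Ncol b 2 + Ncol b 3)) $ r $ c"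
      using nz[of r] upper_triD[OF up, of c r] ord4
      by (cases r rule: cases4; cases c rule: cases4) (simp_all add: less4)
  qed
qed

lemma Borel_inv: assumes b: "b \<in> Borel"
  shows "matrix_inv b = (mat 1 - Ncol b 1) ** (mat 1 - Ncol b 2) ** (mat 1 - Ncol b 3) ** dgm (\<lambda>i. 1 / b$i$i)"
proof (rule inv_unique)
  have nz: "b$i$i \<noteq> 0" for i using Borel_diag_nz[OF b] .
  let ?D = "dgm (\<lambda>i. b$i$i)" and ?D' = "dgm (\<lambda>i. 1 / b$i$i)"
  let ?A = "\<lambda>j. mat 1 - Ncol b j" and ?B = "\<lambda>j. mat 1 + Ncol b j"
  have DD: "X ** ?D' ** ?D = X" for X
  proof -
    have "?D' ** ?D = mat 1" by (rule mat_eqI) (simp add: nz)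
    thus ?thesis by (simp add: matrix_mul_assoc[symmetric])
  qed
  have AB: "X ** ?A j ** ?B j = X" for X j
    using AB_one[OF Ncol_prod[of j j b]] by (simp add: matrix_mul_assoc[symmetric])
  have AB1: "?A 1 ** ?B 1 = mat 1" using AB_one[OF Ncol_prod[of 1 1 b]] by simp
  have "b ** ?A 1 ** ?A 2 ** ?A 3 ** ?D' = b ** (?A 1 ** ?A 2 ** ?A 3 ** ?D')" by (simp add: matrix_mul_assoc)
  show "b ** ((mat 1 - Ncol b 1) ** (mat 1 - Ncol b 2) ** (mat 1 - Ncol b 3) ** dgm (\<lambda>i. 1 / b$i$i)) = mat 1"
  proof -
    have "matrix_inv b ** b = mat 1" using inv_lr(2) Borel_det[OF b] by simp
    have M: "(?A 1 ** ?A 2 ** ?A 3 ** ?D') ** b = mat 1"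
    proof -
      have "(?A 1 ** ?A 2 ** ?A 3 ** ?D') ** b = (?A 1 ** ?A 2 ** ?A 3 ** ?D') ** (?D ** (?B 3 ** ?B 2 ** ?B 1))"
        using Borel_decomp[OF b] by simp
      also have "\<dots> = ?A 1 ** ?A 2 ** ?A 3 ** ?D' ** ?D ** ?B 3 ** ?B 2 ** ?B 1"
        by (simp only: matrix_mul_assoc)
      also have "\<dots> = mat 1" by (simp only: DD AB AB1)
      finally show ?thesis .
    qed
    thus ?thesis using matrix_left_right_inverse by blast
  qed
qed

lemma H_Ad: assumes H: "hessenberg_space H" and y: "y \<in> H" and b: "b \<in> Borel"
  shows "matrix_inv b ** y ** b \<in> H"
proof -
  have nz: "b$i$i \<noteq> 0" for i using Borel_diag_nz[OF b] .
  let ?D = "dgm (\<lambda>i. b$i$i)" and ?D' = "dgm (\<lambda>i. 1 / b$i$i)"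
  let ?A = "\<lambda>j. mat 1 - Ncol b j" and ?B = "\<lambda>j. mat 1 + Ncol b j"
  have y1: "?D' ** y ** ?D \<in> H" using Ad_diag[OF H y, of "\<lambda>i. b$i$i"] nz by simp
  have NN: "Ncol b j ** Ncol b j = 0" for j using Ncol_prod by simp
  have y2: "?A 3 ** (?D' ** y ** ?D) ** ?B 3 \<in> H" using AdN[OF H y1 Ncol_borel NN] .
  have y3: "?A 2 ** (?A 3 ** (?D' ** y ** ?D) ** ?B 3) ** ?B 2 \<in> H" using AdN[OF H y2 Ncol_borel NN] .
  have y4: "?A 1 ** (?A 2 ** (?A 3 ** (?D' ** y ** ?D) ** ?B 3) ** ?B 2) ** ?B 1 \<in> H" using AdN[OF H y3 Ncol_borel NN] .
  have "matrix_inv b ** y ** b = (?A 1 ** ?A 2 ** ?A 3 ** ?D') ** y ** (?D ** (?B 3 ** ?B 2 ** ?B 1))"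
    using Borel_inv[OF b] Borel_decomp[OF b] by simp
  also have "\<dots> = ?A 1 ** (?A 2 ** (?A 3 ** (?D' ** y ** ?D) ** ?B 3) ** ?B 2) ** ?B 1"
    by (simp only: matrix_mul_assoc)
  finally show ?thesis using y4 by simp
qed




section \<open>Permutation matrices\<close>

definition Tp :: "(4 \<Rightarrow> 4) \<Rightarrow> mat4 \<Rightarrow> mat4" where
  "Tp p z = (\<chi> i j. z $ p i $ p j)"

lemma Tp_nth[simp]: "Tp p z $ i $ j = z $ p i $ p j" by (simp add: Tp_def)

lemma pm_nth[simp]: "perm_mat p $ r $ c = (if r = p c then 1 else 0)" by (simp add: perm_mat_def)

lemma sum_delta_bij: fixes p :: "4 \<Rightarrow> 4" assumes "bij p"
  shows "(\<Sum>k\<in>UNIV. (if r = p k then f k else 0)) = (f (inv p r) :: complex)"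
proof -
  have "(\<Sum>k\<in>UNIV. (if r = p k then f k else 0)) = (\<Sum>k\<in>UNIV. (if k = inv p r then f k else 0))"
    using assms by (intro sum.cong) (auto simp: bij_inv_eq_iff)
  also have "\<dots> = f (inv p r)" by (subst sum.delta) auto
  finally show ?thesis .
qed

lemma bij_fi: "bij p \<Longrightarrow> p (inv p x) = x" by (simp add: bij_is_surj surj_f_inv_f)
lemma bij_if: "bij p \<Longrightarrow> inv p (p x) = x" by (simp add: bij_is_inj)

lemma pmT_mult_nth: "bij p \<Longrightarrow> (transpose (perm_mat p) ** A) $ i $ j = A $ p i $ j"
proof -
  assume "bij p"
  have "(transpose (perm_mat p) ** A) $ i $ j = (\<Sum>k\<in>UNIV. (if k = p i then A $ k $ j else 0))"
    unfolding matrix_matrix_mult_def transpose_def by (simp add: if_distrib[of "\<lambda>x. x * _"] cong: if_cong)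
  thus ?thesis by simp
qed

lemma mult_pm_nth: "bij p \<Longrightarrow> (A ** perm_mat p) $ i $ j = A $ i $ p j"
proof -
  assume "bij p"
  have "(A ** perm_mat p) $ i $ j = (\<Sum>k\<in>UNIV. (if k = p j then A $ i $ k else 0))"
    unfolding matrix_matrix_mult_def by (simp add: if_distrib[of "\<lambda>x. _ * x"] cong: if_cong)
  thus ?thesis by simp
qed

lemma pm_mult_nth: "bij p \<Longrightarrow> (perm_mat p ** A) $ i $ j = A $ inv p i $ j"
proof -
  assume b: "bij p"
  have "(perm_mat p ** A) $ i $ j = (\<Sum>k\<in>UNIV. (if i = p k then A $ k $ j else 0))"
    unfolding matrix_matrix_mult_def by (simp add: if_distrib[of "\<lambda>x. x * _"] cong: if_cong)
  thus ?thesis using sum_delta_bij[OF b] by simp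
qed

lemma det_cscale: "det (cscale c (A::mat4)) = c ^ 4 * det A"
proof -
  have "cscale c A = (\<chi> i. (\<lambda>_. c) i *s A $ i)" by (simp add: vec_eq_iff cscale_def)
  hence "det (cscale c A) = prod (\<lambda>_. c) (UNIV::4 set) * det (\<chi> i. A $ i)"
    using det_rows_mul[of "\<lambda>_. c" "\<lambda>i. A $ i"] by simp
  thus ?thesis by (simp add: prod4 power4_eq_xxxx mult.assoc)
qed

lemma pm_pmT: assumes "bij p" shows "perm_mat p ** transpose (perm_mat p) = mat 1"
proof (rule mat_eqI)
  fix i j :: 4
  have "(perm_mat p ** transpose (perm_mat p)) $ i $ j = transpose (perm_mat p) $ inv p i $ j"
    using pm_mult_nth[OF assms] .
  also have "\<dots> = (if i = j then 1 else 0)"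
    using assms bij_fi[OF assms, of i] by (auto simp: transpose_def)
  finally show "(perm_mat p ** transpose (perm_mat p)) $ i $ j = mat 1 $ i $ j" by simp
qed

lemma det_pm_nz: assumes "bij p" shows "det (perm_mat p) \<noteq> 0"
proof -
  have "det (perm_mat p) * det (transpose (perm_mat p)) = 1"
    using pm_pmT[OF assms] det_mul[of "perm_mat p" "transpose (perm_mat p)"] by simp
  thus ?thesis by auto
qed

lemma scaled_pm_SL4: assumes "bij p" shows "\<exists>c. c \<noteq> 0 \<and> cscale c (perm_mat p) \<in> SL4"
proof -
  let ?c = "csqrt (csqrt (1 / det (perm_mat p)))"
  have "?c ^ 4 = 1 / det (perm_mat p)"
  proof -
    have "?c ^ 4 = (?c ^ 2) * (?c ^ 2)" by (simp add: power4_eq_xxxx power2_eq_square)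
    also have "\<dots> = csqrt (1 / det (perm_mat p)) * csqrt (1 / det (perm_mat p))" by simp
    also have "\<dots> = 1 / det (perm_mat p)" using power2_csqrt[of "1 / det (perm_mat p)"] by (simp add: power2_eq_square)
    finally show ?thesis .
  qed
  hence "det (cscale ?c (perm_mat p)) = 1" using det_pm_nz[OF assms] by (simp add: det_cscale)
  moreover hence "?c \<noteq> 0" by (auto simp: det_cscale)
  ultimately show ?thesis unfolding SL4_def by blast
qed

lemma wdot_prop: assumes "bij p" shows "\<exists>c. c \<noteq> 0 \<and> wdot p = cscale c (perm_mat p) \<and> wdot p \<in> SL4"
proof -
  have ex: "\<exists>c. cscale c (perm_mat p) \<in> SL4" using scaled_pm_SL4[OF assms] by blast
  define c where "c = (SOME c. cscale c (perm_mat p) \<in> SL4)"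
  have c: "cscale c (perm_mat p) \<in> SL4" unfolding c_def by (rule someI_ex[OF ex])
  have "c \<noteq> 0" using c unfolding SL4_def by (auto simp: det_cscale)
  thus ?thesis using c unfolding wdot_def c_def[symmetric] by blast
qed

lemma inv_spm: assumes "bij p" "c \<noteq> 0"
  shows "matrix_inv (cscale c (perm_mat p)) = cscale (1/c) (transpose (perm_mat p))"
proof (rule inv_unique)
  have "cscale c (perm_mat p) ** cscale (1/c) (transpose (perm_mat p)) = cscale (c * (1/c)) (perm_mat p ** transpose (perm_mat p))"
    by (simp add: mm_cscaleL mm_cscaleR vec_eq_iff)
  also have "\<dots> = mat 1" using pm_pmT[OF assms(1)] assms(2) by (simp add: vec_eq_iff)
  finally show "cscale c (perm_mat p) ** cscale (1/c) (transpose (perm_mat p)) = mat 1" .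
qed

lemma conj_spm: assumes "bij p" "c \<noteq> 0"
  shows "matrix_inv (cscale c (perm_mat p)) ** z ** cscale c (perm_mat p) = Tp p z"
proof -
  have "matrix_inv (cscale c (perm_mat p)) ** z ** cscale c (perm_mat p)
      = cscale ((1/c) * c) (transpose (perm_mat p) ** z ** perm_mat p)"
    unfolding inv_spm[OF assms] by (simp add: mm_cscaleL mm_cscaleR vec_eq_iff)
  also have "\<dots> = transpose (perm_mat p) ** z ** perm_mat p" using assms(2) by (simp add: vec_eq_iff)
  also have "\<dots> = Tp p z"
    by (rule mat_eqI) (simp add: mult_pm_nth[OF assms(1)] pmT_mult_nth[OF assms(1)])
  finally show ?thesis .
qed

lemma Tp_Em: assumes "bij p" shows "Tp p (Em k l) = Em (inv p k) (inv p l)"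
  by (rule mat_eqI) (auto simp: bij_inv_eq_iff[OF assms])

lemma Tp_add: "Tp p (x + y) = Tp p x + Tp p y" by (rule mat_eqI) simp
lemma Tp_cscale: "Tp p (cscale c x) = cscale c (Tp p x)" by (rule mat_eqI) simp
lemma Tp_zero: "Tp p 0 = 0" by (rule mat_eqI) simp

section \<open>The set K\<close>

definition Kset :: "(4 \<Rightarrow> 4) \<Rightarrow> mat4 set \<Rightarrow> mat4 set" where
  "Kset v H = {z. \<forall>b\<in>Borel. Tp v (matrix_inv b ** z ** b) \<in> H}"

lemma K_sub: assumes "sub H" shows "sub (Kset v H)"
proof -
  have "0 \<in> Kset v H" unfolding Kset_def using subD(1)[OF assms] by (simp add: Tp_zero)
  moreover have "x + y \<in> Kset v H" if "x \<in> Kset v H" "y \<in> Kset v H" for x y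
    using that subD(2)[OF assms] unfolding Kset_def by (simp add: mm_addL mm_addR Tp_add)
  moreover have "cscale c x \<in> Kset v H" if "x \<in> Kset v H" for c x
    using that subD(3)[OF assms] unfolding Kset_def by (simp add: mm_cscaleL mm_cscaleR Tp_cscale)
  ultimately show ?thesis unfolding sub_def by blast
qed

lemma K_Ad: assumes z: "z \<in> Kset v H" and b0: "b0 \<in> Borel" shows "matrix_inv b0 ** z ** b0 \<in> Kset v H"
  unfolding Kset_def
proof (clarsimp)
  fix b assume b: "b \<in> Borel"
  have "matrix_inv b ** (matrix_inv b0 ** z ** b0) ** b = matrix_inv (b0 ** b) ** z ** (b0 ** b)"
    using inv_mult[of b0 b] Borel_det[OF b0] Borel_det[OF b] by (simp add: matrix_mul_assoc)
  thus "Tp v (matrix_inv b ** (matrix_inv b0 ** z ** b0) ** b) \<in> H"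
    using z Borel_mult[OF b0 b] unfolding Kset_def by simp
qed

lemma Em_sq: "a \<noteq> b \<Longrightarrow> Em a b ** Em a b = 0"
  by (rule mat_eqI) simp

lemma upper_Em_plus: "a < b \<Longrightarrow> upper_tri (mat 1 + cscale t (Em a b))"
  unfolding upper_tri_def by auto

lemma Borel_Em: assumes "a < b" shows "mat 1 + cscale t (Em a b) \<in> Borel"
proof -
  have u: "upper_tri (mat 1 + cscale t (Em a b))" using upper_Em_plus[OF assms] .
  have "det (mat 1 + cscale t (Em a b)) = 1" unfolding det_upper[OF u] using assms by auto
  thus ?thesis using u unfolding Borel_def SL4_def by simp
qed

lemma inv_Em: assumes "a < b" shows "matrix_inv (mat 1 + cscale t (Em a b)) = mat 1 + cscale (-t) (Em a b)"
proof (rule inv_unique)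
  have "Em a b ** Em a b = 0" using Em_sq assms by simp
  thus "(mat 1 + cscale t (Em a b)) ** (mat 1 + cscale (- t) (Em a b)) = mat 1"
    by (simp add: mm_addL mm_addR mm_cscaleL mm_cscaleR vec_eq_iff algebra_simps)
qed

lemma K_br: assumes S: "sub H" and z: "z \<in> Kset v H" and ab: "a < b" shows "bracket (Em a b) z \<in> Kset v H"
proof -
  let ?E = "Em a b"
  have SK: "sub (Kset v H)" using K_sub[OF S] .
  have A1: "matrix_inv (mat 1 + cscale (-1) ?E) ** z ** (mat 1 + cscale (-1) ?E) \<in> Kset v H"
    using K_Ad[OF z Borel_Em[OF ab]] .
  have A2: "matrix_inv (mat 1 + cscale 1 ?E) ** z ** (mat 1 + cscale 1 ?E) \<in> Kset v H"
    using K_Ad[OF z Borel_Em[OF ab]] .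
  have EE: "?E ** ?E = 0" using Em_sq ab by simp
  have "bracket ?E z = cscale (1/2) (matrix_inv (mat 1 + cscale (-1) ?E) ** z ** (mat 1 + cscale (-1) ?E)
                       - matrix_inv (mat 1 + cscale 1 ?E) ** z ** (mat 1 + cscale 1 ?E))"
    unfolding inv_Em[OF ab]
    by (rule mat_eqI) (simp add: mm_addL mm_addR mm_cscaleL mm_cscaleR bracket_def algebra_simps)
  thus ?thesis using A1 A2 SK by (simp add: sub_diff subD(3))
qed

definition eK :: "4 \<Rightarrow> complex" where
  "eK i = (if i = 0 then 1 else if i = 1 then 2 else if i = 2 then 3 else 5)"

definition cK :: complex where "cK = csqrt (csqrt (1/30))"

definition dK :: "4 \<Rightarrow> complex" where
  "dK i = cK * eK i"

definition lamK :: "4 \<Rightarrow> 4 \<Rightarrow> complex" where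
  "lamK i j = dK j / dK i"

lemma cK4: "cK ^ 4 = 1/30"
proof -
  have c2: "cK ^ 2 = csqrt (1/30)" unfolding cK_def by (rule power2_csqrt)
  have "cK ^ 4 = (cK ^ 2) ^ 2" by (simp add: power_mult[symmetric])
  also have "\<dots> = 1/30" unfolding c2 by (rule power2_csqrt)
  finally show ?thesis .
qed

lemma cK_nz: "cK \<noteq> 0" using cK4 by auto

lemma eK_nz: "eK i \<noteq> 0" unfolding eK_def by auto

lemma lamK_eq: "lamK i j = lamK k l \<longleftrightarrow> eK j * eK k = eK l * eK i"
  unfolding lamK_def dK_def using cK_nz eK_nz by (auto simp: field_simps)

lemma goodlamK: "goodlam lamK"
proof -
  have "\<forall>i j k l. i \<noteq> j \<longrightarrow> (i,j) \<noteq> (k,l) \<longrightarrow> eK j * eK k \<noteq> eK l * eK i"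
    unfolding eK_def by (simp only: all4) simp
  moreover have "\<forall>i k. lamK i i = lamK k k" using lamK_eq by (simp add: mult.commute)
  ultimately show ?thesis unfolding goodlam_def using lamK_eq by blast
qed

lemma dK_nz: "dK i \<noteq> 0" unfolding dK_def using cK_nz eK_nz by simp

lemma DK_Borel: "dgm dK \<in> Borel"
proof -
  have u: "upper_tri (dgm dK)" unfolding upper_tri_def by auto
  have "det (dgm dK) = cK^4 * 30" unfolding det_upper[OF u] by (simp add: dK_def eK_def power4_eq_xxxx)
  hence "det (dgm dK) = 1" using cK4 by simp
  thus ?thesis using u unfolding Borel_def SL4_def by simp
qed

lemma K_scal: assumes z: "z \<in> Kset v H" shows "scal lamK z \<in> Kset v H"
proof -
  have "matrix_inv (dgm dK) ** z ** dgm dK = scal lamK z"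
    unfolding dgm_inv[OF dK_nz] by (rule mat_eqI) (simp add: scal_def lamK_def)
  thus ?thesis using K_Ad[OF z DK_Borel] by simp
qed

lemma K_bst: assumes "sub H" shows "bst lamK (Kset v H)"
  unfolding bst_def using K_sub[OF assms] K_br[OF assms] K_scal by blast

lemma K_H: "z \<in> Kset v H \<Longrightarrow> Tp v z \<in> H"
  unfolding Kset_def using Borel_one by fastforce

lemma K_H_Em: assumes "bij v" "Em k l \<in> Kset v H" shows "Em (inv v k) (inv v l) \<in> H"
  using K_H[OF assms(2)] Tp_Em[OF assms(1)] by simp




section \<open>Topology of the flag variety\<close>

lemma flag_istop: "istopology (\<lambda>U. U \<subseteq> flag \<and> openin (top_of_set SL4) {g \<in> SL4. coset g \<in> U})"
proof -
  have 1: "S \<inter> T \<subseteq> flag \<and> openin (top_of_set SL4) {g \<in> SL4. coset g \<in> S \<inter> T}"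
    if "S \<subseteq> flag \<and> openin (top_of_set SL4) {g \<in> SL4. coset g \<in> S}"
       "T \<subseteq> flag \<and> openin (top_of_set SL4) {g \<in> SL4. coset g \<in> T}" for S T
  proof -
    have "{g \<in> SL4. coset g \<in> S \<inter> T} = {g \<in> SL4. coset g \<in> S} \<inter> {g \<in> SL4. coset g \<in> T}" by blast
    thus ?thesis using that by (auto intro: openin_Int)
  qed
  have 2: "\<Union>K \<subseteq> flag \<and> openin (top_of_set SL4) {g \<in> SL4. coset g \<in> \<Union>K}"
    if K: "\<forall>S\<in>K. S \<subseteq> flag \<and> openin (top_of_set SL4) {g \<in> SL4. coset g \<in> S}" for K
  proof -
    have "{g \<in> SL4. coset g \<in> \<Union>K} = \<Union>((\<lambda>S. {g \<in> SL4. coset g \<in> S}) ` K)" by blast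
    moreover have "openin (top_of_set SL4) (\<Union>((\<lambda>S. {g \<in> SL4. coset g \<in> S}) ` K))"
      using K by (intro openin_Union) auto
    ultimately show ?thesis using K by auto
  qed
  show ?thesis unfolding istopology_def using 1 2 by blast
qed

lemma openin_flag: "openin flag_top U \<longleftrightarrow> U \<subseteq> flag \<and> openin (top_of_set SL4) {g \<in> SL4. coset g \<in> U}"
  unfolding flag_top_def using topology_inverse'[OF flag_istop] by simp

lemma coset_in_flag: "g \<in> SL4 \<Longrightarrow> coset g \<in> flag"
  unfolding flag_def by blast

lemma topspace_flag: "topspace flag_top = flag"
proof
  show "topspace flag_top \<subseteq> flag" unfolding topspace_def using openin_flag by blast
next
  have "{g \<in> SL4. coset g \<in> flag} = SL4" using coset_in_flag by blast
  hence "openin flag_top flag" unfolding openin_flag by simp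
  thus "flag \<subseteq> topspace flag_top" by (rule openin_subset)
qed

lemma coset_self: "g \<in> coset g"
  unfolding coset_def using Borel_one by (metis (mono_tags, lifting) matrix_mul_rid mem_Collect_eq)

lemma coset_eqD: "coset g = coset g' \<Longrightarrow> \<exists>b\<in>Borel. g = g' ** b"
  using coset_self[of g] unfolding coset_def by auto

lemma upper_I_minus_Ncol: "upper_tri (mat 1 - Ncol b j)"
  unfolding upper_tri_def by auto

lemma Borel_inv_mem: assumes b: "b \<in> Borel" shows "matrix_inv b \<in> Borel"
proof -
  have u: "upper_tri (matrix_inv b)"
    unfolding Borel_inv[OF b]
    by (intro upper_mult upper_I_minus_Ncol) (auto simp: upper_tri_def)
  have "det b * det (matrix_inv b) = 1" using inv_lr(1)[of b] Borel_det[OF b] det_mul[of b "matrix_inv b"] by simp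
  hence "det (matrix_inv b) = 1" using Borel_det[OF b] by simp
  thus ?thesis using u unfolding Borel_def SL4_def by simp
qed

lemma SL4_mult: "a \<in> SL4 \<Longrightarrow> b \<in> SL4 \<Longrightarrow> a ** b \<in> SL4"
  unfolding SL4_def by (simp add: det_mul)

lemma Borel_SL4: "b \<in> Borel \<Longrightarrow> b \<in> SL4"
  unfolding Borel_def by simp

section \<open>Closed B-invariant sets\<close>

definition Fset :: "(mat4 \<Rightarrow> bool) \<Rightarrow> mat4 set set" where
  "Fset P = {coset g | g. g \<in> SL4 \<and> P g}"

lemma Fset_mem: assumes inv: "\<And>g b. b \<in> Borel \<Longrightarrow> P g \<Longrightarrow> P (g ** b)" and g: "g \<in> SL4"
  shows "coset g \<in> Fset P \<longleftrightarrow> P g"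
proof
  assume "coset g \<in> Fset P"
  then obtain g' where g': "coset g = coset g'" "P g'" unfolding Fset_def by blast
  then obtain b where "b \<in> Borel" "g = g' ** b" using coset_eqD by blast
  thus "P g" using inv g' by blast
next
  assume "P g" thus "coset g \<in> Fset P" using g unfolding Fset_def by blast
qed

lemma Fset_closed: assumes inv: "\<And>g b. b \<in> Borel \<Longrightarrow> P g \<Longrightarrow> P (g ** b)"
  and op: "openin (top_of_set SL4) {g \<in> SL4. \<not> P g}"
  shows "closedin flag_top (Fset P)"
proof -
  have sub: "Fset P \<subseteq> flag" unfolding Fset_def using coset_in_flag by blast
  have "{g \<in> SL4. coset g \<in> flag - Fset P} = {g \<in> SL4. \<not> P g}"
    using Fset_mem[where P=P, OF inv] coset_in_flag by blast
  hence "openin flag_top (flag - Fset P)" unfolding openin_flag using op by simp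
  thus ?thesis unfolding closedin_def topspace_flag using sub by simp
qed

definition cell :: "(4 \<Rightarrow> 4) \<Rightarrow> mat4 set set" where
  "cell v = coset ` {b1 ** wdot v ** b2 | b1 b2. b1 \<in> Borel \<and> b2 \<in> Borel}"

lemma schubert_cell: "schubert v = flag_top closure_of cell v"
  unfolding schubert_def cell_def ..

lemma cell_flag: assumes "bij v" shows "cell v \<subseteq> flag"
proof -
  have V: "wdot v \<in> SL4" using wdot_prop[OF assms] by blast
  have "coset (b1 ** wdot v ** b2) \<in> flag" if "b1 \<in> Borel" "b2 \<in> Borel" for b1 b2
    by (rule coset_in_flag, intro SL4_mult V Borel_SL4 that)
  thus ?thesis unfolding cell_def by blast
qed

lemma cell_schubert: assumes "bij v" shows "cell v \<subseteq> schubert v"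
  unfolding schubert_cell using closure_of_subset[of "cell v" flag_top] cell_flag[OF assms] topspace_flag by simp

lemma schubert_Fset:
  assumes inv: "\<And>g b. b \<in> Borel \<Longrightarrow> P g \<Longrightarrow> P (g ** b)"
  and linv: "\<And>g b. b \<in> Borel \<Longrightarrow> P g \<Longrightarrow> P (b ** g)"
  and op: "openin (top_of_set SL4) {g \<in> SL4. \<not> P g}"
  and bv: "bij v" and Pv: "P (wdot v)"
  shows "schubert v \<subseteq> Fset P"
proof -
  have V: "wdot v \<in> SL4" using wdot_prop[OF bv] by blast
  have "coset (b1 ** wdot v ** b2) \<in> Fset P" if "b1 \<in> Borel" "b2 \<in> Borel" for b1 b2
  proof -
    have "b1 ** wdot v ** b2 \<in> SL4" by (intro SL4_mult V Borel_SL4 that)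
    moreover have "P (b1 ** wdot v ** b2)" by (rule inv[OF that(2) linv[OF that(1) Pv]])
    ultimately show ?thesis unfolding Fset_def by blast
  qed
  hence "cell v \<subseteq> Fset P" unfolding cell_def by blast
  thus ?thesis unfolding schubert_cell by (rule closure_of_minimal[OF _ Fset_closed[OF inv op]])
qed

lemma out_point:
  assumes inv: "\<And>g b. b \<in> Borel \<Longrightarrow> P g \<Longrightarrow> P (g ** b)"
  and linv: "\<And>g b. b \<in> Borel \<Longrightarrow> P g \<Longrightarrow> P (b ** g)"
  and op: "openin (top_of_set SL4) {g \<in> SL4. \<not> P g}"
  and bv: "bij v" and Pv: "P (wdot v)" and g: "g \<in> SL4" "\<not> P g"
  shows "coset g \<notin> schubert v"
  using schubert_Fset[OF inv linv op bv Pv] Fset_mem[where P=P, OF inv g(1)] g(2) by blast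

lemma x_in_K: assumes H: "hessenberg_space H" and bv: "bij v" and eq: "hess_var x H = schubert v"
  shows "x \<in> Kset v H"
  unfolding Kset_def
proof (clarify)
  fix b assume b: "b \<in> Borel"
  obtain c where c: "c \<noteq> 0" "wdot v = cscale c (perm_mat v)" "wdot v \<in> SL4" using wdot_prop[OF bv] by blast
  let ?V = "wdot v"
  have "coset (b ** ?V ** mat 1) \<in> cell v" unfolding cell_def using b Borel_one by blast
  hence "coset (b ** ?V) \<in> hess_var x H" using cell_schubert[OF bv] eq by auto
  then obtain g where g: "coset (b ** ?V) = coset g" "g \<in> SL4" "matrix_inv g ** x ** g \<in> H"
    unfolding hess_var_def by blast
  then obtain b' where b': "b' \<in> Borel" "b ** ?V = g ** b'" using coset_eqD by blast
  have dg: "det g \<noteq> 0" using g(2) unfolding SL4_def by simp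
  have db: "det b' \<noteq> 0" using Borel_det[OF b'(1)] by simp
  have "matrix_inv (b ** ?V) ** x ** (b ** ?V) = matrix_inv b' ** (matrix_inv g ** x ** g) ** b'"
    unfolding b'(2) inv_mult[OF dg db] by (simp add: matrix_mul_assoc)
  hence inH: "matrix_inv (b ** ?V) ** x ** (b ** ?V) \<in> H" using H_Ad[OF H g(3) b'(1)] by simp
  have dV: "det ?V \<noteq> 0" using c(3) unfolding SL4_def by simp
  have iv: "matrix_inv (b ** ?V) = matrix_inv ?V ** matrix_inv b" using inv_mult[of b ?V] Borel_det[OF b] dV by simp
  have "matrix_inv (b ** ?V) ** x ** (b ** ?V) = matrix_inv ?V ** (matrix_inv b ** x ** b) ** ?V"
    unfolding iv by (simp add: matrix_mul_assoc)
  also have "\<dots> = Tp v (matrix_inv b ** x ** b)" unfolding c(2) using conj_spm[OF bv c(1)] by simp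
  finally show "Tp v (matrix_inv b ** x ** b) \<in> H" using inH by simp
qed

lemma final_contra:
  assumes inv: "\<And>g b. b \<in> Borel \<Longrightarrow> P g \<Longrightarrow> P (g ** b)"
  and linv: "\<And>g b. b \<in> Borel \<Longrightarrow> P g \<Longrightarrow> P (b ** g)"
  and op: "openin (top_of_set SL4) {g \<in> SL4. \<not> P g}"
  and bv: "bij v" and Pv: "P (wdot v)"
  and bu: "bij u" and Pu: "\<And>c. c \<noteq> 0 \<Longrightarrow> \<not> P (cscale c (perm_mat u))"
  and eq: "hess_var x H = schubert v" and Tu: "Tp u x \<in> H"
  shows False
proof -
  obtain c where c: "c \<noteq> 0" "cscale c (perm_mat u) \<in> SL4" using scaled_pm_SL4[OF bu] by blast
  let ?g = "cscale c (perm_mat u)"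
  have "matrix_inv ?g ** x ** ?g \<in> H" using conj_spm[OF bu c(1)] Tu by simp
  hence "coset ?g \<in> hess_var x H" unfolding hess_var_def using c(2) by blast
  moreover have "coset ?g \<notin> schubert v" using out_point[OF inv linv op bv Pv c(2) Pu[OF c(1)]] .
  ultimately show False using eq by simp
qed




definition pA :: "4 \<Rightarrow> 4" where "pA = (\<lambda>i. if i = 0 then 2 else if i = 1 then 0 else if i = 2 then 1 else 3)"
definition pB :: "4 \<Rightarrow> 4" where "pB = (\<lambda>i. if i = 0 then 1 else if i = 1 then 2 else if i = 2 then 0 else 3)"
definition pC :: "4 \<Rightarrow> 4" where "pC = (\<lambda>i. if i = 0 then 0 else if i = 1 then 3 else if i = 2 then 1 else 2)"
definition pD :: "4 \<Rightarrow> 4" where "pD = (\<lambda>i. if i = 0 then 0 else if i = 1 then 2 else if i = 2 then 3 else 1)"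

lemma pvals:
  "pA 0 = 2" "pA 1 = 0" "pA 2 = 1" "pA 3 = 3"
  "pB 0 = 1" "pB 1 = 2" "pB 2 = 0" "pB 3 = 3"
  "pC 0 = 0" "pC 1 = 3" "pC 2 = 1" "pC 3 = 2"
  "pD 0 = 0" "pD 1 = 2" "pD 2 = 3" "pD 3 = 1"
  "w2341 0 = 1" "w2341 1 = 2" "w2341 2 = 3" "w2341 3 = 0"
  "w4123 0 = 3" "w4123 1 = 0" "w4123 2 = 1" "w4123 3 = 2"
  by (simp_all add: pA_def pB_def pC_def pD_def w2341_def w4123_def)

lemma comp_AB: "pB (pA x) = x" "pA (pB x) = x" by (cases x rule: cases4; simp add: pvals)+
lemma comp_CD: "pD (pC x) = x" "pC (pD x) = x" by (cases x rule: cases4; simp add: pvals)+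
lemma comp_w: "w4123 (w2341 x) = x" "w2341 (w4123 x) = x" by (cases x rule: cases4; simp add: pvals)+

lemma bij_of_inv: "(\<And>x::4. g (f x) = x) \<Longrightarrow> (\<And>y. f (g y) = y) \<Longrightarrow> bij f"
  by (rule o_bij[of g]) (auto simp: fun_eq_iff)

lemma bij_perms: "bij pA" "bij pB" "bij pC" "bij pD" "bij w2341" "bij w4123"
  using bij_of_inv[of pB pA] bij_of_inv[of pA pB] bij_of_inv[of pD pC] bij_of_inv[of pC pD]
    bij_of_inv[of w4123 w2341] bij_of_inv[of w2341 w4123] comp_AB comp_CD comp_w by blast+

lemma inv_perms: "inv w2341 = w4123" "inv w4123 = w2341"
  by (rule inv_equality, simp add: comp_w, simp add: comp_w)+

lemma upper_entries: assumes "upper_tri b"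
  shows "(g ** b)$i$0 = g$i$0 * b$0$0"
    "(g ** b)$i$1 = g$i$0 * b$0$1 + g$i$1 * b$1$1"
    "(g ** b)$i$2 = g$i$0 * b$0$2 + g$i$1 * b$1$2 + g$i$2 * b$2$2"
    "(b ** g)$3$j = b$3$3 * g$3$j"
    "(b ** g)$2$j = b$2$2 * g$2$j + b$2$3 * g$3$j"
    "(b ** g)$1$j = b$1$1 * g$1$j + b$1$2 * g$2$j + b$1$3 * g$3$j"
  using upper_triD[OF assms] ord4 by (simp_all add: mult_nth sum4)

definition c1 :: "mat4 \<Rightarrow> bool" where
  "c1 g \<longleftrightarrow> g$2$0 = 0 \<and> g$3$0 = 0 \<and> g$3$1 = 0"

lemma c1_right: "b \<in> Borel \<Longrightarrow> c1 g \<Longrightarrow> c1 (g ** b)"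
  unfolding c1_def Borel_def by (simp add: upper_entries)

lemma c1_left: "b \<in> Borel \<Longrightarrow> c1 g \<Longrightarrow> c1 (b ** g)"
  unfolding c1_def Borel_def by (simp add: upper_entries)

lemma cont_entry: "continuous_on UNIV (\<lambda>g::mat4. g $ i $ j)"
  by (intro continuous_on_component continuous_on_id)

lemma open_entry_nz: "open {g::mat4. f g \<noteq> 0}" if "continuous_on UNIV f" for f :: "mat4 \<Rightarrow> complex"
  using open_Collect_neq[OF that continuous_on_const] .

lemma c1_open: "openin (top_of_set SL4) {g \<in> SL4. \<not> c1 g}"
proof -
  have "{g \<in> SL4. \<not> c1 g} = SL4 \<inter> ({g. g$2$0 \<noteq> 0} \<union> {g. g$3$0 \<noteq> 0} \<union> {g. g$3$1 \<noteq> 0})"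
    unfolding c1_def by auto
  moreover have "open ({g::mat4. g$2$0 \<noteq> 0} \<union> {g. g$3$0 \<noteq> 0} \<union> {g. g$3$1 \<noteq> 0})"
    by (intro open_Un open_entry_nz cont_entry)
  ultimately show ?thesis by (simp add: openin_open_Int)
qed

lemma c1_v: "c1 (wdot w2341)"
proof -
  obtain c where "wdot w2341 = cscale c (perm_mat w2341)" using wdot_prop[OF bij_perms(5)] by blast
  thus ?thesis unfolding c1_def by (simp add: pvals)
qed

lemma c1_A: "c \<noteq> 0 \<Longrightarrow> \<not> c1 (cscale c (perm_mat pA))"
  unfolding c1_def by (simp add: pvals)

lemma c1_C: "c \<noteq> 0 \<Longrightarrow> \<not> c1 (cscale c (perm_mat pC))"
  unfolding c1_def by (simp add: pvals)

definition c2 :: "mat4 \<Rightarrow> bool" where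
  "c2 g \<longleftrightarrow> g$1$0 * g$2$1 - g$2$0 * g$1$1 = 0 \<and> g$1$0 * g$3$1 - g$3$0 * g$1$1 = 0
     \<and> g$2$0 * g$3$1 - g$3$0 * g$2$1 = 0
     \<and> g$2$0 * g$3$1 - g$2$1 * g$3$0 = 0 \<and> g$2$0 * g$3$2 - g$2$2 * g$3$0 = 0
     \<and> g$2$1 * g$3$2 - g$2$2 * g$3$1 = 0"

lemma c2_right: assumes "b \<in> Borel" "c2 g" shows "c2 (g ** b)"
proof -
  have u: "upper_tri b" using assms(1) unfolding Borel_def by simp
  show ?thesis using assms(2) unfolding c2_def upper_entries[OF u] by algebra
qed

lemma c2_left: assumes "b \<in> Borel" "c2 g" shows "c2 (b ** g)"
proof -
  have u: "upper_tri b" using assms(1) unfolding Borel_def by simp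
  show ?thesis using assms(2) unfolding c2_def upper_entries[OF u] by algebra
qed

lemma c2_open: "openin (top_of_set SL4) {g \<in> SL4. \<not> c2 g}"
proof -
  have "{g \<in> SL4. \<not> c2 g} = SL4 \<inter> ({g. g$1$0 * g$2$1 - g$2$0 * g$1$1 \<noteq> 0} \<union> {g. g$1$0 * g$3$1 - g$3$0 * g$1$1 \<noteq> 0}
     \<union> {g. g$2$0 * g$3$1 - g$3$0 * g$2$1 \<noteq> 0}
     \<union> {g. g$2$0 * g$3$1 - g$2$1 * g$3$0 \<noteq> 0} \<union> {g. g$2$0 * g$3$2 - g$2$2 * g$3$0 \<noteq> 0}
     \<union> {g. g$2$1 * g$3$2 - g$2$2 * g$3$1 \<noteq> 0})"
    unfolding c2_def by auto
  moreover have "open ({g::mat4. g$1$0 * g$2$1 - g$2$0 * g$1$1 \<noteq> 0} \<union> {g. g$1$0 * g$3$1 - g$3$0 * g$1$1 \<noteq> 0}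
     \<union> {g. g$2$0 * g$3$1 - g$3$0 * g$2$1 \<noteq> 0}
     \<union> {g. g$2$0 * g$3$1 - g$2$1 * g$3$0 \<noteq> 0} \<union> {g. g$2$0 * g$3$2 - g$2$2 * g$3$0 \<noteq> 0}
     \<union> {g. g$2$1 * g$3$2 - g$2$2 * g$3$1 \<noteq> 0})"
    by (intro open_Un open_entry_nz continuous_intros cont_entry)
  ultimately show ?thesis by (simp add: openin_open_Int)
qed

lemma c2_v: "c2 (wdot w4123)"
proof -
  obtain c where "wdot w4123 = cscale c (perm_mat w4123)" using wdot_prop[OF bij_perms(6)] by blast
  thus ?thesis unfolding c2_def by (simp add: pvals)
qed

lemma c2_D: "c \<noteq> 0 \<Longrightarrow> \<not> c2 (cscale c (perm_mat pD))"
  unfolding c2_def by (simp add: pvals)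

lemma c2_B: "c \<noteq> 0 \<Longrightarrow> \<not> c2 (cscale c (perm_mat pB))"
  unfolding c2_def by (simp add: pvals)




lemma cscale_zero: "cscale 0 A = 0" by (rule mat_eqI) simp

lemma chKH: assumes H: "hessenberg_space H" and bv: "bij v" and iv: "inv v = vi" and E: "Em k l \<in> Kset v H"
  and "k \<noteq> l" "k' \<le> k" "l \<le> l'" "k' \<noteq> l'" "vi k' \<noteq> vi l'" "p \<le> vi k'" "vi l' \<le> q" "p \<noteq> q"
  shows "Em p q \<in> H"
proof -
  have BK: "bst lamK (Kset v H)" using K_bst[OF hessD(1)[OF H]] .
  have "Em k' l' \<in> Kset v H" using up_in[OF BK E] assms by blast
  hence "Em (vi k') (vi l') \<in> H" using K_H_Em[OF bv] iv by blast
  thus ?thesis using up_in[OF hess_bst[OF H]] assms by blast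
qed

lemma chHH: assumes H: "hessenberg_space H" and E: "Em a b \<in> H" and "a \<noteq> b" "p \<le> a" "b \<le> q" "p \<noteq> q"
  shows "Em p q \<in> H"
  using up_in[OF hess_bst[OF H] E] assms by blast

lemma X1n_off_0_1: assumes H: "hessenberg_space H" and E: "Em 2 0 \<in> (Kset w2341 H)" and C: "Em 3 1 \<notin> H"
  shows "Em 0 1 \<in> H"
  by (rule chKH[OF H bij_perms(5) inv_perms(1) E, where k'=0 and l'=1]) (simp_all add: pvals ord4 le_less)

lemma X1n_off_0_2: assumes H: "hessenberg_space H" and E: "Em 2 1 \<in> (Kset w2341 H)" and C: "Em 3 1 \<notin> H"
  shows "Em 0 2 \<in> H"
  by (rule chKH[OF H bij_perms(5) inv_perms(1) E, where k'=0 and l'=1]) (simp_all add: pvals ord4 le_less)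

lemma X1n_off_0_3: assumes H: "hessenberg_space H" and E: "Em 2 3 \<in> (Kset w2341 H)" and C: "Em 3 1 \<notin> H"
  shows "Em 0 3 \<in> H"
  by (rule chKH[OF H bij_perms(5) inv_perms(1) E, where k'=0 and l'=3]) (simp_all add: pvals ord4 le_less)

lemma X1n_off_1_0: assumes H: "hessenberg_space H" and E: "Em 0 2 \<in> (Kset w2341 H)" and C: "Em 3 1 \<notin> H"
  shows "Em 1 0 \<in> H"
  using chKH[OF H bij_perms(5) inv_perms(1) E, where k'=0 and l'=2 and p=3 and q=1] C by (simp add: pvals ord4 le_less)

lemma X1n_off_1_2: assumes H: "hessenberg_space H" and E: "Em 0 1 \<in> (Kset w2341 H)" and C: "Em 3 1 \<notin> H"
  shows "Em 1 2 \<in> H"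
  by (rule chKH[OF H bij_perms(5) inv_perms(1) E, where k'=0 and l'=1]) (simp_all add: pvals ord4 le_less)

lemma X1n_off_1_3: assumes H: "hessenberg_space H" and E: "Em 0 3 \<in> (Kset w2341 H)" and C: "Em 3 1 \<notin> H"
  shows "Em 1 3 \<in> H"
  by (rule chKH[OF H bij_perms(5) inv_perms(1) E, where k'=0 and l'=3]) (simp_all add: pvals ord4 le_less)

lemma X1n_off_2_0: assumes H: "hessenberg_space H" and E: "Em 1 2 \<in> (Kset w2341 H)" and C: "Em 3 1 \<notin> H"
  shows "Em 2 0 \<in> H"
  using chKH[OF H bij_perms(5) inv_perms(1) E, where k'=0 and l'=2 and p=3 and q=1] C by (simp add: pvals ord4 le_less)

lemma X1n_off_2_1: assumes H: "hessenberg_space H" and E: "Em 1 0 \<in> (Kset w2341 H)" and C: "Em 3 1 \<notin> H"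
  shows "Em 2 1 \<in> H"
  by (rule chKH[OF H bij_perms(5) inv_perms(1) E, where k'=0 and l'=1]) (simp_all add: pvals ord4 le_less)

lemma X1n_off_2_3: assumes H: "hessenberg_space H" and E: "Em 1 3 \<in> (Kset w2341 H)" and C: "Em 3 1 \<notin> H"
  shows "Em 2 3 \<in> H"
  by (rule chKH[OF H bij_perms(5) inv_perms(1) E, where k'=0 and l'=3]) (simp_all add: pvals ord4 le_less)

lemma X1n_off_3_0: assumes H: "hessenberg_space H" and E: "Em 3 2 \<in> (Kset w2341 H)" and C: "Em 3 1 \<notin> H"
  shows "Em 3 0 \<in> H"
  using chKH[OF H bij_perms(5) inv_perms(1) E, where k'=0 and l'=2 and p=3 and q=1] C by (simp add: pvals ord4 le_less)

lemma X1n_off_3_1: assumes H: "hessenberg_space H" and E: "Em 3 0 \<in> (Kset w2341 H)" and C: "Em 3 1 \<notin> H"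
  shows "Em 3 1 \<in> H"
  by (rule chKH[OF H bij_perms(5) inv_perms(1) E, where k'=0 and l'=1]) (simp_all add: pvals ord4 le_less)

lemma X1n_off_3_2: assumes H: "hessenberg_space H" and E: "Em 3 1 \<in> (Kset w2341 H)" and C: "Em 3 1 \<notin> H"
  shows "Em 3 2 \<in> H"
  by (rule chKH[OF H bij_perms(5) inv_perms(1) E, where k'=0 and l'=1]) (simp_all add: pvals ord4 le_less)

lemma X1n_off: assumes H: "hessenberg_space H" and C: "Em 3 1 \<notin> H" and ij: "i \<noteq> j" and E: "Em (pA i) (pA j) \<in> (Kset w2341 H)"
  shows "Em i j \<in> H"
  using ij E X1n_off_0_1[OF H _ C] X1n_off_0_2[OF H _ C] X1n_off_0_3[OF H _ C] X1n_off_1_0[OF H _ C] X1n_off_1_2[OF H _ C] X1n_off_1_3[OF H _ C] X1n_off_2_0[OF H _ C] X1n_off_2_1[OF H _ C] X1n_off_2_3[OF H _ C] X1n_off_3_0[OF H _ C] X1n_off_3_1[OF H _ C] X1n_off_3_2[OF H _ C] by (cases i rule: cases4; cases j rule: cases4) (simp_all add: pvals)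

lemma X1n_diag: assumes H: "hessenberg_space H" and C: "Em 3 1 \<notin> H" and xK: "x \<in> (Kset w2341 H)"
  shows "diagpart (Tp pA x) \<in> H"
proof -
  have SH: "sub H" using hessD(1)[OF H] .
  have B: "bst lamH H" using hess_bst[OF H] .
  have BK: "bst lamK (Kset w2341 H)" using K_bst[OF SH] .
  have dK: "diagpart x \<in> (Kset w2341 H)" using diag_in[OF BK goodlamK xK] .
  have dK0: "\<And>i j. i \<noteq> j \<Longrightarrow> diagpart x $ i $ j = 0" by simp
  have TV: "Tp w2341 (diagpart x) \<in> H" using K_H[OF dK] .
  have T0: "cscale (x$0$0 - x$1$1) ((Em 0 0 - Em 2 2)) \<in> H"
  proof (cases "x$0$0 = x$1$1")
    case True then show ?thesis using subD(1)[OF SH] by (simp add: cscale_zero)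
  next
    case False
    have EK: "Em 0 1 \<in> (Kset w2341 H)" by (rule diag_step[OF BK dK dK0]) (use False ord4 in simp_all)
    have L0: "Em 2 0 \<in> H" by (rule chKH[OF H bij_perms(5) inv_perms(1) EK, where k'=0 and l'=1]) (simp_all add: pvals ord4 le_less)
    have h0: "Em 0 0 - Em 2 2 \<in> H" by (rule low_h[OF B L0]) (simp add: ord4)
    have "(Em 0 0 - Em 2 2) \<in> H" using h0 by (blast intro: subD(2)[OF SH] subD(3)[OF SH])
    thus ?thesis by (rule subD(3)[OF SH])
  qed
  have T1: "cscale (x$0$0 - x$2$2) (dgm (\<lambda>t. if t = 0 then -1 else if t = 1 then 1 else if t = 2 then 0 else 0)) \<in> H"
  proof (cases "x$0$0 = x$2$2")
    case True then show ?thesis using subD(1)[OF SH] by (simp add: cscale_zero)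
  next
    case False
    have EK: "Em 0 2 \<in> (Kset w2341 H)" by (rule diag_step[OF BK dK dK0]) (use False ord4 in simp_all)
    have "Em 3 1 \<in> H" by (rule chKH[OF H bij_perms(5) inv_perms(1) EK, where k'=0 and l'=2]) (simp_all add: pvals ord4 le_less)
    thus ?thesis using C by simp
  qed
  have T2: "cscale (x$0$0 - x$3$3) ((Em 2 2 - Em 3 3)) \<in> H"
  proof (cases "x$0$0 = x$3$3")
    case True then show ?thesis using subD(1)[OF SH] by (simp add: cscale_zero)
  next
    case False
    have EK: "Em 0 3 \<in> (Kset w2341 H)" by (rule diag_step[OF BK dK dK0]) (use False ord4 in simp_all)
    have L0: "Em 3 2 \<in> H" by (rule chKH[OF H bij_perms(5) inv_perms(1) EK, where k'=0 and l'=3]) (simp_all add: pvals ord4 le_less)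
    have h0: "Em 2 2 - Em 3 3 \<in> H" by (rule low_h[OF B L0]) (simp add: ord4)
    have "(Em 2 2 - Em 3 3) \<in> H" using h0 by (blast intro: subD(2)[OF SH] subD(3)[OF SH])
    thus ?thesis by (rule subD(3)[OF SH])
  qed
  have EQ: "diagpart (Tp pA x) = Tp w2341 (diagpart x) + cscale (x$0$0 - x$1$1) ((Em 0 0 - Em 2 2)) + cscale (x$0$0 - x$2$2) (dgm (\<lambda>t. if t = 0 then -1 else if t = 1 then 1 else if t = 2 then 0 else 0)) + cscale (x$0$0 - x$3$3) ((Em 2 2 - Em 3 3))"
    by (rule mat_eqI, simp only: diagpart_nth Tp_nth, case_tac i rule: cases4; case_tac j rule: cases4) (simp_all add: pvals algebra_simps)
  show ?thesis unfolding EQ using TV T0 T1 T2 by (intro subD(2)[OF SH]; assumption?)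
qed

lemma X1n_core: assumes H: "hessenberg_space H" and C: "Em 3 1 \<notin> H" and xK: "x \<in> (Kset w2341 H)"
  shows "Tp pA x \<in> H"
proof (rule memtest[OF hessD(1)[OF H]])
  have BK: "bst lamK (Kset w2341 H)" using K_bst[OF hessD(1)[OF H]] .
  fix i j assume ij: "i \<noteq> j" "Tp pA x $ i $ j \<noteq> 0"
  have uij: "pA i \<noteq> pA j" using ij(1) bij_is_inj[OF bij_perms(1)] by (auto dest: injD)
  have "Em (pA i) (pA j) \<in> (Kset w2341 H)" using comp_in[OF BK goodlamK xK uij] ij(2) by simp
  thus "Em i j \<in> H" using X1n_off[OF H C ij(1)] by blast
next
  show "diagpart (Tp pA x) \<in> H" using X1n_diag[OF H C xK] .
qed

lemma X1p_off_0_1: assumes H: "hessenberg_space H" and E: "Em 0 3 \<in> (Kset w2341 H)" and C: "Em 3 1 \<in> H"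
  shows "Em 0 1 \<in> H"
  by (rule chHH[OF H C]) (simp_all add: ord4 le_less)

lemma X1p_off_0_2: assumes H: "hessenberg_space H" and E: "Em 0 1 \<in> (Kset w2341 H)" and C: "Em 3 1 \<in> H"
  shows "Em 0 2 \<in> H"
  by (rule chKH[OF H bij_perms(5) inv_perms(1) E, where k'=0 and l'=1]) (simp_all add: pvals ord4 le_less)

lemma X1p_off_0_3: assumes H: "hessenberg_space H" and E: "Em 0 2 \<in> (Kset w2341 H)" and C: "Em 3 1 \<in> H"
  shows "Em 0 3 \<in> H"
  by (rule chKH[OF H bij_perms(5) inv_perms(1) E, where k'=0 and l'=2]) (simp_all add: pvals ord4 le_less)

lemma X1p_off_1_0: assumes H: "hessenberg_space H" and E: "Em 3 0 \<in> (Kset w2341 H)" and C: "Em 3 1 \<in> H"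
  shows "Em 1 0 \<in> H"
  by (rule chKH[OF H bij_perms(5) inv_perms(1) E, where k'=0 and l'=1]) (simp_all add: pvals ord4 le_less)

lemma X1p_off_1_2: assumes H: "hessenberg_space H" and E: "Em 3 1 \<in> (Kset w2341 H)" and C: "Em 3 1 \<in> H"
  shows "Em 1 2 \<in> H"
  by (rule chKH[OF H bij_perms(5) inv_perms(1) E, where k'=0 and l'=1]) (simp_all add: pvals ord4 le_less)

lemma X1p_off_1_3: assumes H: "hessenberg_space H" and E: "Em 3 2 \<in> (Kset w2341 H)" and C: "Em 3 1 \<in> H"
  shows "Em 1 3 \<in> H"
  by (rule chKH[OF H bij_perms(5) inv_perms(1) E, where k'=0 and l'=2]) (simp_all add: pvals ord4 le_less)

lemma X1p_off_2_0: assumes H: "hessenberg_space H" and E: "Em 1 0 \<in> (Kset w2341 H)" and C: "Em 3 1 \<in> H"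
  shows "Em 2 0 \<in> H"
  by (rule chKH[OF H bij_perms(5) inv_perms(1) E, where k'=0 and l'=1]) (simp_all add: pvals ord4 le_less)

lemma X1p_off_2_1: assumes H: "hessenberg_space H" and E: "Em 1 3 \<in> (Kset w2341 H)" and C: "Em 3 1 \<in> H"
  shows "Em 2 1 \<in> H"
  by (rule chHH[OF H C]) (simp_all add: ord4 le_less)

lemma X1p_off_2_3: assumes H: "hessenberg_space H" and E: "Em 1 2 \<in> (Kset w2341 H)" and C: "Em 3 1 \<in> H"
  shows "Em 2 3 \<in> H"
  by (rule chKH[OF H bij_perms(5) inv_perms(1) E, where k'=0 and l'=2]) (simp_all add: pvals ord4 le_less)

lemma X1p_off_3_0: assumes H: "hessenberg_space H" and E: "Em 2 0 \<in> (Kset w2341 H)" and C: "Em 3 1 \<in> H"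
  shows "Em 3 0 \<in> H"
  by (rule chKH[OF H bij_perms(5) inv_perms(1) E, where k'=0 and l'=1]) (simp_all add: pvals ord4 le_less)

lemma X1p_off_3_1: assumes H: "hessenberg_space H" and E: "Em 2 3 \<in> (Kset w2341 H)" and C: "Em 3 1 \<in> H"
  shows "Em 3 1 \<in> H"
  by (rule chHH[OF H C]) (simp_all add: ord4 le_less)

lemma X1p_off_3_2: assumes H: "hessenberg_space H" and E: "Em 2 1 \<in> (Kset w2341 H)" and C: "Em 3 1 \<in> H"
  shows "Em 3 2 \<in> H"
  by (rule chKH[OF H bij_perms(5) inv_perms(1) E, where k'=0 and l'=1]) (simp_all add: pvals ord4 le_less)

lemma X1p_off: assumes H: "hessenberg_space H" and C: "Em 3 1 \<in> H" and ij: "i \<noteq> j" and E: "Em (pC i) (pC j) \<in> (Kset w2341 H)"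
  shows "Em i j \<in> H"
  using ij E X1p_off_0_1[OF H _ C] X1p_off_0_2[OF H _ C] X1p_off_0_3[OF H _ C] X1p_off_1_0[OF H _ C] X1p_off_1_2[OF H _ C] X1p_off_1_3[OF H _ C] X1p_off_2_0[OF H _ C] X1p_off_2_1[OF H _ C] X1p_off_2_3[OF H _ C] X1p_off_3_0[OF H _ C] X1p_off_3_1[OF H _ C] X1p_off_3_2[OF H _ C] by (cases i rule: cases4; cases j rule: cases4) (simp_all add: pvals)

lemma X1p_diag: assumes H: "hessenberg_space H" and C: "Em 3 1 \<in> H" and xK: "x \<in> (Kset w2341 H)"
  shows "diagpart (Tp pC x) \<in> H"
proof -
  have SH: "sub H" using hessD(1)[OF H] .
  have B: "bst lamH H" using hess_bst[OF H] .
  have BK: "bst lamK (Kset w2341 H)" using K_bst[OF SH] .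
  have dK: "diagpart x \<in> (Kset w2341 H)" using diag_in[OF BK goodlamK xK] .
  have dK0: "\<And>i j. i \<noteq> j \<Longrightarrow> diagpart x $ i $ j = 0" by simp
  have TV: "Tp w2341 (diagpart x) \<in> H" using K_H[OF dK] .
  have T0: "cscale (x$0$0 - x$1$1) ((Em 0 0 - Em 2 2)) \<in> H"
  proof (cases "x$0$0 = x$1$1")
    case True then show ?thesis using subD(1)[OF SH] by (simp add: cscale_zero)
  next
    case False
    have EK: "Em 0 1 \<in> (Kset w2341 H)" by (rule diag_step[OF BK dK dK0]) (use False ord4 in simp_all)
    have L0: "Em 2 0 \<in> H" by (rule chKH[OF H bij_perms(5) inv_perms(1) EK, where k'=0 and l'=1]) (simp_all add: pvals ord4 le_less)
    have h0: "Em 0 0 - Em 2 2 \<in> H" by (rule low_h[OF B L0]) (simp add: ord4)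
    have "(Em 0 0 - Em 2 2) \<in> H" using h0 by (blast intro: subD(2)[OF SH] subD(3)[OF SH])
    thus ?thesis by (rule subD(3)[OF SH])
  qed
  have T1: "cscale (x$0$0 - x$2$2) ((Em 1 1 - Em 3 3)) \<in> H"
  proof (cases "x$0$0 = x$2$2")
    case True then show ?thesis using subD(1)[OF SH] by (simp add: cscale_zero)
  next
    case False
    have EK: "Em 0 2 \<in> (Kset w2341 H)" by (rule diag_step[OF BK dK dK0]) (use False ord4 in simp_all)
    have L0: "Em 3 1 \<in> H" by (rule chKH[OF H bij_perms(5) inv_perms(1) EK, where k'=0 and l'=2]) (simp_all add: pvals ord4 le_less)
    have h0: "Em 1 1 - Em 3 3 \<in> H" by (rule low_h[OF B L0]) (simp add: ord4)
    have "(Em 1 1 - Em 3 3) \<in> H" using h0 by (blast intro: subD(2)[OF SH] subD(3)[OF SH])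
    thus ?thesis by (rule subD(3)[OF SH])
  qed
  have T2: "cscale (x$0$0 - x$3$3) (cscale (-1) (Em 1 1 - Em 2 2)) \<in> H"
  proof (cases "x$0$0 = x$3$3")
    case True then show ?thesis using subD(1)[OF SH] by (simp add: cscale_zero)
  next
    case False
    have EK: "Em 0 3 \<in> (Kset w2341 H)" by (rule diag_step[OF BK dK dK0]) (use False ord4 in simp_all)
    have L0: "Em 2 1 \<in> H" by (rule chHH[OF H C]) (simp_all add: ord4 le_less)
    have h0: "Em 1 1 - Em 2 2 \<in> H" by (rule low_h[OF B L0]) (simp add: ord4)
    have "cscale (-1) (Em 1 1 - Em 2 2) \<in> H" using h0 by (blast intro: subD(2)[OF SH] subD(3)[OF SH])
    thus ?thesis by (rule subD(3)[OF SH])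
  qed
  have EQ: "diagpart (Tp pC x) = Tp w2341 (diagpart x) + cscale (x$0$0 - x$1$1) ((Em 0 0 - Em 2 2)) + cscale (x$0$0 - x$2$2) ((Em 1 1 - Em 3 3)) + cscale (x$0$0 - x$3$3) (cscale (-1) (Em 1 1 - Em 2 2))"
    by (rule mat_eqI, simp only: diagpart_nth Tp_nth, case_tac i rule: cases4; case_tac j rule: cases4) (simp_all add: pvals algebra_simps)
  show ?thesis unfolding EQ using TV T0 T1 T2 by (intro subD(2)[OF SH]; assumption?)
qed

lemma X1p_core: assumes H: "hessenberg_space H" and C: "Em 3 1 \<in> H" and xK: "x \<in> (Kset w2341 H)"
  shows "Tp pC x \<in> H"
proof (rule memtest[OF hessD(1)[OF H]])
  have BK: "bst lamK (Kset w2341 H)" using K_bst[OF hessD(1)[OF H]] .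
  fix i j assume ij: "i \<noteq> j" "Tp pC x $ i $ j \<noteq> 0"
  have uij: "pC i \<noteq> pC j" using ij(1) bij_is_inj[OF bij_perms(3)] by (auto dest: injD)
  have "Em (pC i) (pC j) \<in> (Kset w2341 H)" using comp_in[OF BK goodlamK xK uij] ij(2) by simp
  thus "Em i j \<in> H" using X1p_off[OF H C ij(1)] by blast
next
  show "diagpart (Tp pC x) \<in> H" using X1p_diag[OF H C xK] .
qed

lemma X2n_off_0_1: assumes H: "hessenberg_space H" and E: "Em 0 2 \<in> (Kset w4123 H)" and C: "Em 2 0 \<notin> H"
  shows "Em 0 1 \<in> H"
  by (rule chKH[OF H bij_perms(6) inv_perms(2) E, where k'=0 and l'=3]) (simp_all add: pvals ord4 le_less)

lemma X2n_off_0_2: assumes H: "hessenberg_space H" and E: "Em 0 3 \<in> (Kset w4123 H)" and C: "Em 2 0 \<notin> H"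
  shows "Em 0 2 \<in> H"
  by (rule chKH[OF H bij_perms(6) inv_perms(2) E, where k'=0 and l'=3]) (simp_all add: pvals ord4 le_less)

lemma X2n_off_0_3: assumes H: "hessenberg_space H" and E: "Em 0 1 \<in> (Kset w4123 H)" and C: "Em 2 0 \<notin> H"
  shows "Em 0 3 \<in> H"
  by (rule chKH[OF H bij_perms(6) inv_perms(2) E, where k'=0 and l'=1]) (simp_all add: pvals ord4 le_less)

lemma X2n_off_1_0: assumes H: "hessenberg_space H" and E: "Em 2 0 \<in> (Kset w4123 H)" and C: "Em 2 0 \<notin> H"
  shows "Em 1 0 \<in> H"
  by (rule chKH[OF H bij_perms(6) inv_perms(2) E, where k'=0 and l'=3]) (simp_all add: pvals ord4 le_less)

lemma X2n_off_1_2: assumes H: "hessenberg_space H" and E: "Em 2 3 \<in> (Kset w4123 H)" and C: "Em 2 0 \<notin> H"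
  shows "Em 1 2 \<in> H"
  by (rule chKH[OF H bij_perms(6) inv_perms(2) E, where k'=0 and l'=3]) (simp_all add: pvals ord4 le_less)

lemma X2n_off_1_3: assumes H: "hessenberg_space H" and E: "Em 2 1 \<in> (Kset w4123 H)" and C: "Em 2 0 \<notin> H"
  shows "Em 1 3 \<in> H"
  by (rule chKH[OF H bij_perms(6) inv_perms(2) E, where k'=0 and l'=1]) (simp_all add: pvals ord4 le_less)

lemma X2n_off_2_0: assumes H: "hessenberg_space H" and E: "Em 3 0 \<in> (Kset w4123 H)" and C: "Em 2 0 \<notin> H"
  shows "Em 2 0 \<in> H"
  by (rule chKH[OF H bij_perms(6) inv_perms(2) E, where k'=1 and l'=3]) (simp_all add: pvals ord4 le_less)

lemma X2n_off_2_1: assumes H: "hessenberg_space H" and E: "Em 3 2 \<in> (Kset w4123 H)" and C: "Em 2 0 \<notin> H"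
  shows "Em 2 1 \<in> H"
  by (rule chKH[OF H bij_perms(6) inv_perms(2) E, where k'=1 and l'=3]) (simp_all add: pvals ord4 le_less)

lemma X2n_off_2_3: assumes H: "hessenberg_space H" and E: "Em 3 1 \<in> (Kset w4123 H)" and C: "Em 2 0 \<notin> H"
  shows "Em 2 3 \<in> H"
  by (rule chKH[OF H bij_perms(6) inv_perms(2) E, where k'=1 and l'=2]) (simp_all add: pvals ord4 le_less)

lemma X2n_off_3_0: assumes H: "hessenberg_space H" and E: "Em 1 0 \<in> (Kset w4123 H)" and C: "Em 2 0 \<notin> H"
  shows "Em 3 0 \<in> H"
  using chKH[OF H bij_perms(6) inv_perms(2) E, where k'=1 and l'=3 and p=2 and q=0] C by (simp add: pvals ord4 le_less)

lemma X2n_off_3_1: assumes H: "hessenberg_space H" and E: "Em 1 2 \<in> (Kset w4123 H)" and C: "Em 2 0 \<notin> H"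
  shows "Em 3 1 \<in> H"
  using chKH[OF H bij_perms(6) inv_perms(2) E, where k'=1 and l'=3 and p=2 and q=0] C by (simp add: pvals ord4 le_less)

lemma X2n_off_3_2: assumes H: "hessenberg_space H" and E: "Em 1 3 \<in> (Kset w4123 H)" and C: "Em 2 0 \<notin> H"
  shows "Em 3 2 \<in> H"
  using chKH[OF H bij_perms(6) inv_perms(2) E, where k'=1 and l'=3 and p=2 and q=0] C by (simp add: pvals ord4 le_less)

lemma X2n_off: assumes H: "hessenberg_space H" and C: "Em 2 0 \<notin> H" and ij: "i \<noteq> j" and E: "Em (pD i) (pD j) \<in> (Kset w4123 H)"
  shows "Em i j \<in> H"
  using ij E X2n_off_0_1[OF H _ C] X2n_off_0_2[OF H _ C] X2n_off_0_3[OF H _ C] X2n_off_1_0[OF H _ C] X2n_off_1_2[OF H _ C] X2n_off_1_3[OF H _ C] X2n_off_2_0[OF H _ C] X2n_off_2_1[OF H _ C] X2n_off_2_3[OF H _ C] X2n_off_3_0[OF H _ C] X2n_off_3_1[OF H _ C] X2n_off_3_2[OF H _ C] by (cases i rule: cases4; cases j rule: cases4) (simp_all add: pvals)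

lemma X2n_diag: assumes H: "hessenberg_space H" and C: "Em 2 0 \<notin> H" and xK: "x \<in> (Kset w4123 H)"
  shows "diagpart (Tp pD x) \<in> H"
proof -
  have SH: "sub H" using hessD(1)[OF H] .
  have B: "bst lamH H" using hess_bst[OF H] .
  have BK: "bst lamK (Kset w4123 H)" using K_bst[OF SH] .
  have dK: "diagpart x \<in> (Kset w4123 H)" using diag_in[OF BK goodlamK xK] .
  have dK0: "\<And>i j. i \<noteq> j \<Longrightarrow> diagpart x $ i $ j = 0" by simp
  have TV: "Tp w4123 (diagpart x) \<in> H" using K_H[OF dK] .
  have T0: "cscale (x$0$0 - x$1$1) ((Em 0 0 - Em 1 1)) \<in> H"
  proof (cases "x$0$0 = x$1$1")
    case True then show ?thesis using subD(1)[OF SH] by (simp add: cscale_zero)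
  next
    case False
    have EK: "Em 0 1 \<in> (Kset w4123 H)" by (rule diag_step[OF BK dK dK0]) (use False ord4 in simp_all)
    have L0: "Em 1 0 \<in> H" by (rule chKH[OF H bij_perms(6) inv_perms(2) EK, where k'=0 and l'=3]) (simp_all add: pvals ord4 le_less)
    have h0: "Em 0 0 - Em 1 1 \<in> H" by (rule low_h[OF B L0]) (simp add: ord4)
    have "(Em 0 0 - Em 1 1) \<in> H" using h0 by (blast intro: subD(2)[OF SH] subD(3)[OF SH])
    thus ?thesis by (rule subD(3)[OF SH])
  qed
  have T1: "cscale (x$1$1 - x$2$2) (dgm (\<lambda>t. if t = 0 then 0 else if t = 1 then -1 else if t = 2 then 0 else 1)) \<in> H"
  proof (cases "x$1$1 = x$2$2")
    case True then show ?thesis using subD(1)[OF SH] by (simp add: cscale_zero)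
  next
    case False
    have EK: "Em 1 2 \<in> (Kset w4123 H)" by (rule diag_step[OF BK dK dK0]) (use False ord4 in simp_all)
    have "Em 2 0 \<in> H" by (rule chKH[OF H bij_perms(6) inv_perms(2) EK, where k'=1 and l'=3]) (simp_all add: pvals ord4 le_less)
    thus ?thesis using C by simp
  qed
  have T2: "cscale (x$1$1 - x$3$3) ((Em 0 0 - Em 2 2)) \<in> H"
  proof (cases "x$1$1 = x$3$3")
    case True then show ?thesis using subD(1)[OF SH] by (simp add: cscale_zero)
  next
    case False
    have EK: "Em 1 3 \<in> (Kset w4123 H)" by (rule diag_step[OF BK dK dK0]) (use False ord4 in simp_all)
    have L0: "Em 2 0 \<in> H" by (rule chKH[OF H bij_perms(6) inv_perms(2) EK, where k'=1 and l'=3]) (simp_all add: pvals ord4 le_less)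
    have h0: "Em 0 0 - Em 2 2 \<in> H" by (rule low_h[OF B L0]) (simp add: ord4)
    have "(Em 0 0 - Em 2 2) \<in> H" using h0 by (blast intro: subD(2)[OF SH] subD(3)[OF SH])
    thus ?thesis by (rule subD(3)[OF SH])
  qed
  have EQ: "diagpart (Tp pD x) = Tp w4123 (diagpart x) + cscale (x$0$0 - x$1$1) ((Em 0 0 - Em 1 1)) + cscale (x$1$1 - x$2$2) (dgm (\<lambda>t. if t = 0 then 0 else if t = 1 then -1 else if t = 2 then 0 else 1)) + cscale (x$1$1 - x$3$3) ((Em 0 0 - Em 2 2))"
    by (rule mat_eqI, simp only: diagpart_nth Tp_nth, case_tac i rule: cases4; case_tac j rule: cases4) (simp_all add: pvals algebra_simps)
  show ?thesis unfolding EQ using TV T0 T1 T2 by (intro subD(2)[OF SH]; assumption?)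
qed

lemma X2n_core: assumes H: "hessenberg_space H" and C: "Em 2 0 \<notin> H" and xK: "x \<in> (Kset w4123 H)"
  shows "Tp pD x \<in> H"
proof (rule memtest[OF hessD(1)[OF H]])
  have BK: "bst lamK (Kset w4123 H)" using K_bst[OF hessD(1)[OF H]] .
  fix i j assume ij: "i \<noteq> j" "Tp pD x $ i $ j \<noteq> 0"
  have uij: "pD i \<noteq> pD j" using ij(1) bij_is_inj[OF bij_perms(4)] by (auto dest: injD)
  have "Em (pD i) (pD j) \<in> (Kset w4123 H)" using comp_in[OF BK goodlamK xK uij] ij(2) by simp
  thus "Em i j \<in> H" using X2n_off[OF H C ij(1)] by blast
next
  show "diagpart (Tp pD x) \<in> H" using X2n_diag[OF H C xK] .
qed

lemma X2p_off_0_1: assumes H: "hessenberg_space H" and E: "Em 1 2 \<in> (Kset w4123 H)" and C: "Em 2 0 \<in> H"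
  shows "Em 0 1 \<in> H"
  by (rule chKH[OF H bij_perms(6) inv_perms(2) E, where k'=0 and l'=3]) (simp_all add: pvals ord4 le_less)

lemma X2p_off_0_2: assumes H: "hessenberg_space H" and E: "Em 1 0 \<in> (Kset w4123 H)" and C: "Em 2 0 \<in> H"
  shows "Em 0 2 \<in> H"
  by (rule chKH[OF H bij_perms(6) inv_perms(2) E, where k'=0 and l'=1]) (simp_all add: pvals ord4 le_less)

lemma X2p_off_0_3: assumes H: "hessenberg_space H" and E: "Em 1 3 \<in> (Kset w4123 H)" and C: "Em 2 0 \<in> H"
  shows "Em 0 3 \<in> H"
  by (rule chKH[OF H bij_perms(6) inv_perms(2) E, where k'=0 and l'=3]) (simp_all add: pvals ord4 le_less)

lemma X2p_off_1_0: assumes H: "hessenberg_space H" and E: "Em 2 1 \<in> (Kset w4123 H)" and C: "Em 2 0 \<in> H"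
  shows "Em 1 0 \<in> H"
  by (rule chKH[OF H bij_perms(6) inv_perms(2) E, where k'=0 and l'=3]) (simp_all add: pvals ord4 le_less)

lemma X2p_off_1_2: assumes H: "hessenberg_space H" and E: "Em 2 0 \<in> (Kset w4123 H)" and C: "Em 2 0 \<in> H"
  shows "Em 1 2 \<in> H"
  by (rule chKH[OF H bij_perms(6) inv_perms(2) E, where k'=0 and l'=1]) (simp_all add: pvals ord4 le_less)

lemma X2p_off_1_3: assumes H: "hessenberg_space H" and E: "Em 2 3 \<in> (Kset w4123 H)" and C: "Em 2 0 \<in> H"
  shows "Em 1 3 \<in> H"
  by (rule chKH[OF H bij_perms(6) inv_perms(2) E, where k'=0 and l'=3]) (simp_all add: pvals ord4 le_less)

lemma X2p_off_2_0: assumes H: "hessenberg_space H" and E: "Em 0 1 \<in> (Kset w4123 H)" and C: "Em 2 0 \<in> H"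
  shows "Em 2 0 \<in> H"
  by (rule chHH[OF H C]) (simp_all add: ord4 le_less)

lemma X2p_off_2_1: assumes H: "hessenberg_space H" and E: "Em 0 2 \<in> (Kset w4123 H)" and C: "Em 2 0 \<in> H"
  shows "Em 2 1 \<in> H"
  by (rule chHH[OF H C]) (simp_all add: ord4 le_less)

lemma X2p_off_2_3: assumes H: "hessenberg_space H" and E: "Em 0 3 \<in> (Kset w4123 H)" and C: "Em 2 0 \<in> H"
  shows "Em 2 3 \<in> H"
  by (rule chHH[OF H C]) (simp_all add: ord4 le_less)

lemma X2p_off_3_0: assumes H: "hessenberg_space H" and E: "Em 3 1 \<in> (Kset w4123 H)" and C: "Em 2 0 \<in> H"
  shows "Em 3 0 \<in> H"
  by (rule chKH[OF H bij_perms(6) inv_perms(2) E, where k'=2 and l'=3]) (simp_all add: pvals ord4 le_less)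

lemma X2p_off_3_1: assumes H: "hessenberg_space H" and E: "Em 3 2 \<in> (Kset w4123 H)" and C: "Em 2 0 \<in> H"
  shows "Em 3 1 \<in> H"
  by (rule chKH[OF H bij_perms(6) inv_perms(2) E, where k'=2 and l'=3]) (simp_all add: pvals ord4 le_less)

lemma X2p_off_3_2: assumes H: "hessenberg_space H" and E: "Em 3 0 \<in> (Kset w4123 H)" and C: "Em 2 0 \<in> H"
  shows "Em 3 2 \<in> H"
  by (rule chKH[OF H bij_perms(6) inv_perms(2) E, where k'=2 and l'=0]) (simp_all add: pvals ord4 le_less)

lemma X2p_off: assumes H: "hessenberg_space H" and C: "Em 2 0 \<in> H" and ij: "i \<noteq> j" and E: "Em (pB i) (pB j) \<in> (Kset w4123 H)"
  shows "Em i j \<in> H"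
  using ij E X2p_off_0_1[OF H _ C] X2p_off_0_2[OF H _ C] X2p_off_0_3[OF H _ C] X2p_off_1_0[OF H _ C] X2p_off_1_2[OF H _ C] X2p_off_1_3[OF H _ C] X2p_off_2_0[OF H _ C] X2p_off_2_1[OF H _ C] X2p_off_2_3[OF H _ C] X2p_off_3_0[OF H _ C] X2p_off_3_1[OF H _ C] X2p_off_3_2[OF H _ C] by (cases i rule: cases4; cases j rule: cases4) (simp_all add: pvals)

lemma X2p_diag: assumes H: "hessenberg_space H" and C: "Em 2 0 \<in> H" and xK: "x \<in> (Kset w4123 H)"
  shows "diagpart (Tp pB x) \<in> H"
proof -
  have SH: "sub H" using hessD(1)[OF H] .
  have B: "bst lamH H" using hess_bst[OF H] .
  have BK: "bst lamK (Kset w4123 H)" using K_bst[OF SH] .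
  have dK: "diagpart x \<in> (Kset w4123 H)" using diag_in[OF BK goodlamK xK] .
  have dK0: "\<And>i j. i \<noteq> j \<Longrightarrow> diagpart x $ i $ j = 0" by simp
  have TV: "Tp w4123 (diagpart x) \<in> H" using K_H[OF dK] .
  have T0: "cscale (x$0$0 - x$1$1) (cscale (-1) (Em 0 0 - Em 2 2)) \<in> H"
  proof (cases "x$0$0 = x$1$1")
    case True then show ?thesis using subD(1)[OF SH] by (simp add: cscale_zero)
  next
    case False
    have EK: "Em 0 1 \<in> (Kset w4123 H)" by (rule diag_step[OF BK dK dK0]) (use False ord4 in simp_all)
    have L0: "Em 2 0 \<in> H" by (rule chHH[OF H C]) (simp_all add: ord4 le_less)
    have h0: "Em 0 0 - Em 2 2 \<in> H" by (rule low_h[OF B L0]) (simp add: ord4)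
    have "cscale (-1) (Em 0 0 - Em 2 2) \<in> H" using h0 by (blast intro: subD(2)[OF SH] subD(3)[OF SH])
    thus ?thesis by (rule subD(3)[OF SH])
  qed
  have T1: "cscale (x$0$0 - x$2$2) ((Em 0 0 - Em 1 1)) \<in> H"
  proof (cases "x$0$0 = x$2$2")
    case True then show ?thesis using subD(1)[OF SH] by (simp add: cscale_zero)
  next
    case False
    have EK: "Em 0 2 \<in> (Kset w4123 H)" by (rule diag_step[OF BK dK dK0]) (use False ord4 in simp_all)
    have L0: "Em 1 0 \<in> H" by (rule chKH[OF H bij_perms(6) inv_perms(2) EK, where k'=0 and l'=3]) (simp_all add: pvals ord4 le_less)
    have h0: "Em 0 0 - Em 1 1 \<in> H" by (rule low_h[OF B L0]) (simp add: ord4)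
    have "(Em 0 0 - Em 1 1) \<in> H" using h0 by (blast intro: subD(2)[OF SH] subD(3)[OF SH])
    thus ?thesis by (rule subD(3)[OF SH])
  qed
  have T2: "cscale (x$2$2 - x$3$3) ((Em 0 0 - Em 3 3)) \<in> H"
  proof (cases "x$2$2 = x$3$3")
    case True then show ?thesis using subD(1)[OF SH] by (simp add: cscale_zero)
  next
    case False
    have EK: "Em 2 3 \<in> (Kset w4123 H)" by (rule diag_step[OF BK dK dK0]) (use False ord4 in simp_all)
    have L0: "Em 3 0 \<in> H" by (rule chKH[OF H bij_perms(6) inv_perms(2) EK, where k'=2 and l'=3]) (simp_all add: pvals ord4 le_less)
    have h0: "Em 0 0 - Em 3 3 \<in> H" by (rule low_h[OF B L0]) (simp add: ord4)
    have "(Em 0 0 - Em 3 3) \<in> H" using h0 by (blast intro: subD(2)[OF SH] subD(3)[OF SH])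
    thus ?thesis by (rule subD(3)[OF SH])
  qed
  have EQ: "diagpart (Tp pB x) = Tp w4123 (diagpart x) + cscale (x$0$0 - x$1$1) (cscale (-1) (Em 0 0 - Em 2 2)) + cscale (x$0$0 - x$2$2) ((Em 0 0 - Em 1 1)) + cscale (x$2$2 - x$3$3) ((Em 0 0 - Em 3 3))"
    by (rule mat_eqI, simp only: diagpart_nth Tp_nth, case_tac i rule: cases4; case_tac j rule: cases4) (simp_all add: pvals algebra_simps)
  show ?thesis unfolding EQ using TV T0 T1 T2 by (intro subD(2)[OF SH]; assumption?)
qed

lemma X2p_core: assumes H: "hessenberg_space H" and C: "Em 2 0 \<in> H" and xK: "x \<in> (Kset w4123 H)"
  shows "Tp pB x \<in> H"
proof (rule memtest[OF hessD(1)[OF H]])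
  have BK: "bst lamK (Kset w4123 H)" using K_bst[OF hessD(1)[OF H]] .
  fix i j assume ij: "i \<noteq> j" "Tp pB x $ i $ j \<noteq> 0"
  have uij: "pB i \<noteq> pB j" using ij(1) bij_is_inj[OF bij_perms(2)] by (auto dest: injD)
  have "Em (pB i) (pB j) \<in> (Kset w4123 H)" using comp_in[OF BK goodlamK xK uij] ij(2) by simp
  thus "Em i j \<in> H" using X2p_off[OF H C ij(1)] by blast
next
  show "diagpart (Tp pB x) \<in> H" using X2p_diag[OF H C xK] .
qed

theorem lemma4p5:
  assumes "w \<in> {w4123, w2341}"
  shows "\<not> (\<exists>x H. x \<in> sl4 \<and> hessenberg_space H \<and> hess_var x H = schubert (inv w))"
proof
  assume "\<exists>x H. x \<in> sl4 \<and> hessenberg_space H \<and> hess_var x H = schubert (inv w)"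
  then obtain x H where H: "hessenberg_space H" and eq0: "hess_var x H = schubert (inv w)" by blast
  from assms have "w = w4123 \<or> w = w2341" by simp
  then show False
  proof
    assume "w = w4123"
    hence eq: "hess_var x H = schubert w2341" using eq0 inv_perms by simp
    have xK: "x \<in> Kset w2341 H" using x_in_K[OF H bij_perms(5) eq] .
    show False
    proof (cases "Em 3 1 \<in> H")
      case True
      show False using final_contra[where P=c1, OF c1_right c1_left c1_open bij_perms(5) c1_v bij_perms(3) c1_C eq X1p_core[OF H True xK]] .
    next
      case False
      show False using final_contra[where P=c1, OF c1_right c1_left c1_open bij_perms(5) c1_v bij_perms(1) c1_A eq X1n_core[OF H False xK]] .
    qed
  next
    assume "w = w2341"
    hence eq: "hess_var x H = schubert w4123" using eq0 inv_perms by simp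
    have xK: "x \<in> Kset w4123 H" using x_in_K[OF H bij_perms(6) eq] .
    show False
    proof (cases "Em 2 0 \<in> H")
      case True
      show False using final_contra[where P=c2, OF c2_right c2_left c2_open bij_perms(6) c2_v bij_perms(2) c2_B eq X2p_core[OF H True xK]] .
    next
      case False
      show False using final_contra[where P=c2, OF c2_right c2_left c2_open bij_perms(6) c2_v bij_perms(4) c2_D eq X2n_core[OF H False xK]] .
    qed
  qed
qed


end
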